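(* Let $C$ be an ordinary non-singular plane quartic defined over $k$, let $\gamma\in\Gamma$, $Q\in\mathcal{D}_\gamma$, and let $\phi:C\to C_Q$ be an isomorphism with $\sigma\phi\circ\phi^{-1}=\gamma$. Let $\mathcal{B}$ be the set of bitangents of $C$. Then $\mathrm{Aut}_k(\mathcal{B})=\phi^{-1}\circ\Gamma_\gamma\circ\phi$. Moreover, if $C'$ is another ordinary non-singular plane quartic with $\phi(C')=C_{Q'}$ for some $Q'\in\mathcal{Q}$, then $$\mathrm{Isom}_k(C,C')=\phi^{-1}\circ\{\rho\in\Gamma_\gamma:\rho(Q)=Q'\}\circ\phi.$$ In particular $\mathrm{Aut}_k(C)=\phi^{-1}\circ\Gamma_\gamma(Q)\circ\phi$.
   Context: $k=\mathbb{F}_q$, $q$ a power of 2, $\sigma(a)=a^q$ the Frobenius acting coefficientwise. Isomorphisms between non-singular plane quartics are induced by unique elements of $\mathrm{PGL}_3(\overline{k})$; $\mathrm{Isom}_k(C,C')$ (resp. $\mathrm{Aut}_k(C)$) denotes those induced by elements of $\mathrm{PGL}_3(k)$. For a subset $\mathcal{B}$ of lines, $\mathrm{Aut}_k(\mathcal{B})=\{\rho\in\mathrm{PGL}_3(k):\rho(\mathcal{B})=\mathcal{B}\}$. For $\gamma\in\mathrm{PGL}_3(\overline{k})$ with rows $\ell_1,\ell_2,\ell_3$, $F^\gamma=F(\ell_1,\ell_2,\ell_3)$. $\mathcal{Q}$ is the set of quadratic forms $Q=ax^2+by^2+cz^2+dxy+eyz+fzx$ over $\overline{k}$ with $abc\ne0$,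 $a+b+d\ne0$, $b+c+e\ne0$, $a+c+f\ne0$, $a+b+c+d+e+f\ne1$; $C_Q:Q^2=xyz(x+y+z)$. $\Gamma=\mathrm{PGL}_3(\mathbb{F}_2)$; $H_\gamma$ defined by $\ell_1\ell_2\ell_3(\ell_1+\ell_2+\ell_3)=xyz(x+y+z)+H_\gamma^2$; $\gamma(Q)=Q^{\gamma^{-1}}+H_{\gamma^{-1}}$, so $\gamma(C_Q)=C_{\gamma(Q)}$. $\mathcal{D}_\gamma=\{Q\in\mathcal{Q}:\gamma(Q)=\sigma Q\}$. $\Gamma_\gamma$ is the centralizer of $\gamma$ in $\Gamma$ and $\Gamma_\gamma(Q)$ the stabilizer of $Q$ in $\Gamma_\gamma$. Ordinary means Jacobian of 2-rank 3. *)

theory Defs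
  imports "HOL-Analysis.Analysis" "HOL-Computational_Algebra.Polynomial"
begin

text \<open>A field K is (a model of) the algebraic closure of F_2 iff it has characteristic 2,
  is algebraically closed, and every element is algebraic over F_2, i.e. lies in some
  finite field F_(2^n).\<close>

definition is_F2bar :: "'K::field itself \<Rightarrow> bool" where
  "is_F2bar _ \<longleftrightarrow> (2::'K) = 0
     \<and> (\<forall>p::'K poly. degree p > 0 \<longrightarrow> (\<exists>x. poly p x = 0))
     \<and> (\<forall>a::'K. \<exists>n>0. a ^ (2 ^ n) = a)"

definition Fq :: "nat \<Rightarrow> 'K::field set" where
  "Fq q = {a. a ^ q = a}"

type_synonym 'K tform = "nat \<times> nat \<times> nat \<Rightarrow> 'K"

definition exps :: "nat \<Rightarrow> (nat \<times> nat \<times> nat) set" where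
  "exps d = {(a, b, c). a + b + c = d}"

definition mon :: "nat \<times> nat \<times> nat \<Rightarrow> 'K::comm_ring_1^3 \<Rightarrow> 'K" where
  "mon e v = (case e of (a, b, c) \<Rightarrow> (v$1) ^ a * (v$2) ^ b * (v$3) ^ c)"

definition is_form :: "nat \<Rightarrow> 'K::comm_ring_1 tform \<Rightarrow> bool" where
  "is_form d F \<longleftrightarrow> (\<forall>e. F e \<noteq> 0 \<longrightarrow> e \<in> exps d)"

definition feval :: "nat \<Rightarrow> 'K::comm_ring_1 tform \<Rightarrow> 'K^3 \<Rightarrow> 'K" where
  "feval d F v = (\<Sum>e\<in>exps d. F e * mon e v)"

definition dX :: "'K::comm_ring_1 tform \<Rightarrow> 'K tform" where
  "dX F = (\<lambda>(a, b, c). of_nat (a + 1) * F (a + 1, b, c))"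
definition dY :: "'K::comm_ring_1 tform \<Rightarrow> 'K tform" where
  "dY F = (\<lambda>(a, b, c). of_nat (b + 1) * F (a, b + 1, c))"
definition dZ :: "'K::comm_ring_1 tform \<Rightarrow> 'K tform" where
  "dZ F = (\<lambda>(a, b, c). of_nat (c + 1) * F (a, b, c + 1))"

definition nonsing_quartic :: "'K::field tform \<Rightarrow> bool" where
  "nonsing_quartic F \<longleftrightarrow> is_form 4 F \<and> F \<noteq> (\<lambda>_. 0) \<and>
     (\<forall>v::'K^3. v \<noteq> 0 \<longrightarrow>
        \<not> (feval 4 F v = 0 \<and> feval 3 (dX F) v = 0 \<and> feval 3 (dY F) v = 0 \<and> feval 3 (dZ F) v = 0))"

definition defined_over :: "'K::field set \<Rightarrow> 'K tform \<Rightarrow> bool" where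
  "defined_over k F \<longleftrightarrow> (\<forall>e. F e \<in> k)"

text \<open>Ordinary (2-rank of the Jacobian equal to the genus 3): the Hasse--Witt
  (Cartier--Manin) matrix of the quartic is invertible. For a plane quartic F in
  characteristic 2 its entries are the coefficients of F at the monomials 2u_i - u_j,
  where u_1=(2,1,1), u_2=(1,2,1), u_3=(1,1,2) (Stoehr--Voloch).\<close>
definition hw_u :: "3 \<Rightarrow> nat \<times> nat \<times> nat" where
  "hw_u i = (if i = 1 then (2, 1, 1) else if i = 2 then (1, 2, 1) else (1, 1, 2))"

definition hw_exp :: "nat \<times> nat \<times> nat \<Rightarrow> nat \<times> nat \<times> nat \<Rightarrow> nat \<times> nat \<times> nat" where
  "hw_exp u w = (case u of (a, b, c) \<Rightarrow> case w of (a', b', c') \<Rightarrow>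
                  (2 * a - a', 2 * b - b', 2 * c - c'))"

definition hasse_witt :: "'K::field tform \<Rightarrow> 'K^3^3" where
  "hasse_witt F = (\<chi> i j. F (hw_exp (hw_u i) (hw_u j)))"

definition ordinary :: "'K::field tform \<Rightarrow> bool" where
  "ordinary F \<longleftrightarrow> det (hasse_witt F) \<noteq> 0"

definition smat :: "'K::field \<Rightarrow> 'K^3^3 \<Rightarrow> 'K^3^3" where
  "smat c A = (\<chi> i j. c * A$i$j)"

definition pgl_eq :: "'K::field^3^3 \<Rightarrow> 'K^3^3 \<Rightarrow> bool" where
  "pgl_eq A B \<longleftrightarrow> (\<exists>c. c \<noteq> 0 \<and> A = smat c B)"

definition in_PGL3 :: "'K::field set \<Rightarrow> 'K^3^3 \<Rightarrow> bool" where
  "in_PGL3 k A \<longleftrightarrow> invertible A \<and> (\<exists>c. c \<noteq> 0 \<and> (\<forall>i j. c * A$i$j \<in> k))"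

definition frob_mat :: "nat \<Rightarrow> 'K::field^3^3 \<Rightarrow> 'K^3^3" where
  "frob_mat q A = (\<chi> i j. (A$i$j) ^ q)"

text \<open>The matrix A maps the curve f = 0 onto the curve f' = 0 (as projective plane
  curves), i.e. f'^A is a nonzero multiple of f. Curves are given by their defining
  homogeneous polynomial functions.\<close>
definition maps_curve :: "'K::field^3^3 \<Rightarrow> ('K^3 \<Rightarrow> 'K) \<Rightarrow> ('K^3 \<Rightarrow> 'K) \<Rightarrow> bool" where
  "maps_curve A f f' \<longleftrightarrow> invertible A \<and> (\<exists>c. c \<noteq> 0 \<and> (\<forall>v. f' (A *v v) = c * f v))"

text \<open>Gamma = PGL_3(F_2): invertible matrices with entries in F_2 = {0,1}
  (scalars in F_2 are trivial, so these are exactly the elements).\<close>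
definition Gamma :: "('K::field^3^3) set" where
  "Gamma = {G. invertible G \<and> (\<forall>i j. G$i$j = 0 \<or> G$i$j = 1)}"

definition centralizer :: "'K::field^3^3 \<Rightarrow> ('K^3^3) set" where
  "centralizer G = {R \<in> Gamma. R ** G = G ** R}"

datatype 'K qform = QF (qa: 'K) (qb: 'K) (qc: 'K) (qd: 'K) (qe: 'K) (qf: 'K)

definition qeval :: "'K::comm_ring_1 qform \<Rightarrow> 'K^3 \<Rightarrow> 'K" where
  "qeval Q v = qa Q * (v$1)^2 + qb Q * (v$2)^2 + qc Q * (v$3)^2
             + qd Q * (v$1) * (v$2) + qe Q * (v$2) * (v$3) + qf Q * (v$3) * (v$1)"

definition QQ :: "'K::field qform set" where
  "QQ = {Q. qa Q * qb Q * qc Q \<noteq> 0 \<and> qa Q + qb Q + qd Q \<noteq> 0 \<and> qb Q + qc Q + qe Q \<noteq> 0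
          \<and> qa Q + qc Q + qf Q \<noteq> 0 \<and> qa Q + qb Q + qc Q + qd Q + qe Q + qf Q \<noteq> 1}"

definition CQ :: "'K::field qform \<Rightarrow> 'K^3 \<Rightarrow> 'K" where
  "CQ Q v = (qeval Q v)^2 - (v$1) * (v$2) * (v$3) * (v$1 + v$2 + v$3)"

definition Hq :: "'K::field^3^3 \<Rightarrow> 'K qform" where
  "Hq G = (THE H. \<forall>v. let w = G *v v in
              (w$1) * (w$2) * (w$3) * (w$1 + w$2 + w$3)
              = (v$1) * (v$2) * (v$3) * (v$1 + v$2 + v$3) + (qeval H v)^2)"

definition gact :: "'K::field^3^3 \<Rightarrow> 'K qform \<Rightarrow> 'K qform" where
  "gact G Q = (THE Q'. \<forall>v. qeval Q' v
                = qeval Q (matrix_inv G *v v) + qeval (Hq (matrix_inv G)) v)"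

definition frob_q :: "nat \<Rightarrow> 'K::field qform \<Rightarrow> 'K qform" where
  "frob_q q Q = QF (qa Q ^ q) (qb Q ^ q) (qc Q ^ q) (qd Q ^ q) (qe Q ^ q) (qf Q ^ q)"

definition DD :: "nat \<Rightarrow> 'K::field^3^3 \<Rightarrow> 'K qform set" where
  "DD q G = {Q \<in> QQ. gact G Q = frob_q q Q}"

definition ldot :: "'K::comm_ring_1^3 \<Rightarrow> 'K^3 \<Rightarrow> 'K" where
  "ldot a v = (\<Sum>i\<in>UNIV. a$i * v$i)"

text \<open>The line a = 0 (a nonzero) is a bitangent of F = 0: the restriction of F to the
  line is the square of a binary quadratic form (intersection divisor 2D).\<close>
definition is_bitangent :: "'K::field tform \<Rightarrow> 'K^3 \<Rightarrow> bool" where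
  "is_bitangent F a \<longleftrightarrow> a \<noteq> 0 \<and>
     (\<exists>u w. ldot a u = 0 \<and> ldot a w = 0 \<and> \<not> (\<exists>c. u = c *s w) \<and> w \<noteq> 0 \<and>
        (\<exists>\<alpha> \<beta> \<gamma>. \<forall>s t. feval 4 F (s *s u + t *s w) = (\<alpha> * s^2 + \<beta> * s * t + \<gamma> * t^2)^2))"

text \<open>Lines as point sets (in the affine cone K^3).\<close>
definition bitangents :: "'K::field tform \<Rightarrow> ('K^3) set set" where
  "bitangents F = {{v. ldot a v = 0} | a. is_bitangent F a}"

definition image_lines :: "'K::field^3^3 \<Rightarrow> ('K^3) set set \<Rightarrow> ('K^3) set set" where
  "image_lines A B = (\<lambda>L. (\<lambda>v. A *v v) ` L) ` B"

definition Aut_lines :: "'K::field set \<Rightarrow> ('K^3) set set \<Rightarrow> ('K^3^3) set" where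
  "Aut_lines k B = {R. in_PGL3 k R \<and> image_lines R B = B}"

end

theory Submission
  imports Defs
begin

section \<open>Characteristic 2 arithmetic\<close>

lemma c2_add_self: "(2::'K::field) = 0 \<Longrightarrow> (a::'K) + a = 0"
proof -
  assume "(2::'K) = 0"
  have "a + a = 2 * a" by (rule mult_2[symmetric])
  also have "\<dots> = 0" using \<open>(2::'K) = 0\<close> by simp
  finally show ?thesis .
qed

lemma c2_add_self2:
  assumes h: "(2::'K::field) = 0" shows "(a::'K) + (a + b) = b"
proof -
  have "a + (a + b) = (a + a) + b" by (rule add.assoc[symmetric])
  also have "\<dots> = 0 + b" by (rule arg_cong[where f="\<lambda>t. t + b", OF c2_add_self[OF h]])
  also have "\<dots> = b" by (rule add_0_left)
  finally show ?thesis .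
qed

lemma c2_minus: "(2::'K::field) = 0 \<Longrightarrow> - (a::'K) = a"
  by (rule minus_unique[OF c2_add_self])

lemma c2_diff: "(2::'K::field) = 0 \<Longrightarrow> (a::'K) - b = a + b"
  by (simp only: diff_conv_add_uminus c2_minus)

lemma c2_eq:
  assumes h: "(2::'K::field) = 0" shows "(a = (b::'K)) \<longleftrightarrow> a + b = 0"
proof
  assume "a = b" then show "a + b = 0" using c2_add_self[OF h] by simp
next
  assume "a + b = 0"
  then have "a = - b" by (rule eq_neg_iff_add_eq_0[THEN iffD2])
  then show "a = b" using c2_minus[OF h, of b] by simp
qed

lemma c2_num0:
  assumes h: "(2::'K::field) = 0" shows "(numeral (Num.Bit0 n) :: 'K) = 0"
  by (simp only: numeral_Bit0 c2_add_self[OF h])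

lemma c2_num1:
  assumes h: "(2::'K::field) = 0" shows "(numeral (Num.Bit1 n) :: 'K) = 1"
  by (simp only: numeral_Bit1 c2_add_self[OF h] add_0_left)

lemma c2_sq_add:
  assumes two: "(2::'K::field) = 0" shows "((x::'K) + y) * (x + y) = x * x + y * y"
  apply (subst c2_eq[OF two])
  apply (simp only: distrib_left distrib_right)
  apply (simp only: add.assoc mult.assoc)
  apply (simp only: ac_simps)
  apply (simp add: c2_add_self[OF two] c2_add_self2[OF two])
  done

lemma c2_sq_inj:
  assumes two: "(2::'K::field) = 0" and "(x::'K) * x = y * y" shows "x = y"
proof -
  have "(x + y) * (x + y) = 0"
    using assms(2) by (simp only: c2_sq_add[OF two] c2_add_self[OF two])
  then have "x + y = 0" by simp
  then show ?thesis using c2_eq[OF two] by blast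
qed

lemma c2_pow2_add:
  assumes two: "(2::'K::field) = 0" shows "((x::'K) + y) ^ (2 ^ n) = x ^ (2 ^ n) + y ^ (2 ^ n)"
proof (induction n)
  case 0 then show ?case by simp
next
  case (Suc n)
  have "(x + y) ^ (2 ^ Suc n) = ((x + y) ^ (2 ^ n)) * ((x + y) ^ (2 ^ n))"
    by (simp add: power_mult[symmetric] power2_eq_square[symmetric] mult.commute)
  also have "\<dots> = (x ^ (2 ^ n) + y ^ (2 ^ n)) * (x ^ (2 ^ n) + y ^ (2 ^ n))" using Suc by simp
  also have "\<dots> = x ^ (2 ^ n) * x ^ (2 ^ n) + y ^ (2 ^ n) * y ^ (2 ^ n)" by (rule c2_sq_add[OF two])
  also have "\<dots> = x ^ (2 ^ Suc n) + y ^ (2 ^ Suc n)"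
    by (simp add: power_mult[symmetric] power2_eq_square[symmetric] mult.commute)
  finally show ?case .
qed

lemma F2bar_two: "is_F2bar TYPE('K::field) \<Longrightarrow> (2::'K) = 0"
  unfolding is_F2bar_def by blast

lemma F2bar_sqrt:
  assumes "is_F2bar TYPE('K::field)" shows "\<exists>b::'K. b * b = a"
proof -
  obtain n where n: "n > 0" "a ^ (2 ^ n) = a" using assms unfolding is_F2bar_def by blast
  have "(2::nat) ^ n = 2 ^ (n - 1) + 2 ^ (n - 1)" using n(1)
    by (metis Suc_diff_1 mult_2 power_Suc)
  then have "a ^ (2 ^ (n - 1)) * a ^ (2 ^ (n - 1)) = a"
    using n(2) by (metis power_add)
  then show ?thesis by blast
qed

lemma F2bar_omega:
  assumes "is_F2bar TYPE('K::field)" shows "\<exists>w::'K. w * w + w + 1 = 0"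
proof -
  have "degree [:(1::'K), 1, 1:] > 0" by simp
  then obtain x where "poly [:(1::'K), 1, 1:] x = 0"
    using assms unfolding is_F2bar_def by blast
  then have "x * x + x + 1 = 0" by (simp add: algebra_simps)
  then show ?thesis by blast
qed
section \<open>Binary quartics that are squares\<close>

lemma quad_3roots:
  fixes A B C r1 r2 r3 :: "'K::field"
  assumes d: "r1 \<noteq> r2" "r1 \<noteq> r3" "r2 \<noteq> r3"
    and e: "A*r1*r1 + B*r1 + C = 0" "A*r2*r2 + B*r2 + C = 0" "A*r3*r3 + B*r3 + C = 0"
  shows "A = 0 \<and> B = 0 \<and> C = 0"
proof -
  have "(r1 - r2) * (A*(r1+r2) + B) = (A*r1*r1 + B*r1 + C) - (A*r2*r2 + B*r2 + C)" by algebra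
  then have "(r1 - r2) * (A*(r1+r2) + B) = 0" using e(1,2) by simp
  then have 1: "A*(r1+r2) + B = 0" using d by simp
  have "(r1 - r3) * (A*(r1+r3) + B) = (A*r1*r1 + B*r1 + C) - (A*r3*r3 + B*r3 + C)" by algebra
  then have "(r1 - r3) * (A*(r1+r3) + B) = 0" using e(1,3) by simp
  then have 2: "A*(r1+r3) + B = 0" using d by simp
  have "A * (r2 - r3) = (A*(r1+r2) + B) - (A*(r1+r3) + B)" by algebra
  then have "A * (r2 - r3) = 0" using 1 2 by simp
  then have A: "A = 0" using d by simp
  then have "B = 0" using 1 by simp
  then show ?thesis using A e(1) by simp
qed

lemma quartic_sq_coeffs:
  fixes h4 h3 h2 h1 h0 \<alpha> \<beta> \<gamma> w :: "'K::field"
  assumes two: "(2::'K) = 0" and w: "w * w + w + 1 = 0"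
    and H: "\<forall>s t. h4* s^4 + h3* s^3*t + h2* s^2*t^2 + h1* s*t^3 + h0*t^4 = (\<alpha>* s^2 + \<beta>* s*t + \<gamma>*t^2)^2"
  shows "h3 = 0 \<and> h1 = 0"
proof -
  have sq: "(\<alpha>* s^2 + \<beta>* s*t + \<gamma>*t^2)^2 = \<alpha>*\<alpha>* s^4 + \<beta>*\<beta>* s^2*t^2 + \<gamma>*\<gamma>*t^4" for s t
    apply (subst c2_eq[OF two])
    apply (simp only: power2_eq_square power4_eq_xxxx)
    apply (simp only: distrib_left distrib_right)
    apply (simp only: add.assoc mult.assoc)
    apply (simp only: ac_simps)
    apply (simp add: c2_add_self[OF two] c2_add_self2[OF two])
    done
  have H': "h4* s^4 + h3* s^3*t + h2* s^2*t^2 + h1* s*t^3 + h0*t^4 = \<alpha>*\<alpha>* s^4 + \<beta>*\<beta>* s^2*t^2 + \<gamma>*\<gamma>*t^4" for s t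
    using H sq by metis
  have h4: "h4 = \<alpha>*\<alpha>" using H'[of 1 0] by simp
  have h0: "h0 = \<gamma>*\<gamma>" using H'[of 0 1] by simp
  have P: "h3* s* s + (h2 - \<beta>*\<beta>)* s + h1 = 0" if "s \<noteq> 0" for s
  proof -
    have "s * (h3* s* s + (h2 - \<beta>*\<beta>)* s + h1) = 0"
      using H'[of s 1] h4 h0 by (simp add: algebra_simps power2_eq_square power3_eq_cube power4_eq_xxxx)
    then show ?thesis using that by simp
  qed
  have w0: "w \<noteq> 0" using w by auto
  have w1: "w \<noteq> 1"
  proof
    assume "w = 1"
    then have "(1::'K) * 1 + 1 + 1 = 0" using w by simp
    then have "(1::'K) = 0" by (simp only: mult_1_left c2_add_self[OF two] add_0_left)
    then show False by simp
  qed
  have w2: "w + 1 \<noteq> 0" using w1 c2_eq[OF two, of w 1] by simp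
  have d: "(1::'K) \<noteq> w" "(1::'K) \<noteq> w + 1" "w \<noteq> w + 1" using w0 w1 by auto
  have "h3 = 0 \<and> h2 - \<beta>*\<beta> = 0 \<and> h1 = 0"
    by (rule quad_3roots[OF d P[of 1] P[of w] P[of "w+1"]]) (use w0 w2 in auto)
  then show ?thesis by simp
qed

lemma quartic_sq_iff:
  fixes h4 h3 h2 h1 h0 w :: "'K::field"
  assumes two: "(2::'K) = 0" and w: "w * w + w + 1 = 0" and sqrt: "\<And>a::'K. \<exists>b. b * b = a"
  shows "(\<exists>\<alpha> \<beta> \<gamma>. \<forall>s t. h4* s^4 + h3* s^3*t + h2* s^2*t^2 + h1* s*t^3 + h0*t^4 = (\<alpha>* s^2 + \<beta>* s*t + \<gamma>*t^2)^2)
         \<longleftrightarrow> h3 = 0 \<and> h1 = 0"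
proof
  assume "\<exists>\<alpha> \<beta> \<gamma>. \<forall>s t. h4* s^4 + h3* s^3*t + h2* s^2*t^2 + h1* s*t^3 + h0*t^4 = (\<alpha>* s^2 + \<beta>* s*t + \<gamma>*t^2)^2"
  then show "h3 = 0 \<and> h1 = 0" using quartic_sq_coeffs[OF two w] by blast
next
  assume h: "h3 = 0 \<and> h1 = 0"
  obtain a where a: "a * a = h4" using sqrt by blast
  obtain b where b: "b * b = h2" using sqrt by blast
  obtain c where c: "c * c = h0" using sqrt by blast
  have "\<forall>s t. h4* s^4 + h3* s^3*t + h2* s^2*t^2 + h1* s*t^3 + h0*t^4 = (a* s^2 + b* s*t + c*t^2)^2"
  proof (intro allI)
    fix s t
    have "(a* s^2 + b* s*t + c*t^2)^2 = a*a* s^4 + b*b* s^2*t^2 + c*c*t^4"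
      apply (subst c2_eq[OF two])
      apply (simp only: power2_eq_square power4_eq_xxxx)
      apply (simp only: distrib_left distrib_right)
      apply (simp only: add.assoc mult.assoc)
      apply (simp only: ac_simps)
      apply (simp add: c2_add_self[OF two] c2_add_self2[OF two])
      done
    then show "h4* s^4 + h3* s^3*t + h2* s^2*t^2 + h1* s*t^3 + h0*t^4 = (a* s^2 + b* s*t + c*t^2)^2"
      using h a b c by simp
  qed
  then show "\<exists>\<alpha> \<beta> \<gamma>. \<forall>s t. h4* s^4 + h3* s^3*t + h2* s^2*t^2 + h1* s*t^3 + h0*t^4 = (\<alpha>* s^2 + \<beta>* s*t + \<gamma>*t^2)^2"
    by blast
qed

definition sq_on :: "('K::field^3 \<Rightarrow> 'K) \<Rightarrow> 'K^3 \<Rightarrow> 'K^3 \<Rightarrow> bool" where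
  "sq_on f u w \<longleftrightarrow> (\<exists>\<alpha> \<beta> \<gamma>. \<forall>s t. f (s *s u + t *s w) = (\<alpha> * s^2 + \<beta> * s * t + \<gamma> * t^2)^2)"

lemma mv_smult: "(A::'K::field^3^3) *v (c *s x) = c *s (A *v x)"
  by (simp add: matrix_vector_mult_def vec_eq_iff sum_distrib_left algebra_simps)

lemma mv_lin2: "(A::'K::field^3^3) *v (s *s u + t *s w) = s *s (A *v u) + t *s (A *v w)"
  by (simp add: matrix_vector_right_distrib mv_smult)

lemma sq_on_span:
  assumes "sq_on f u w"
  shows "sq_on f (p *s u + q *s w) (r *s u + k *s w)"
proof -
  obtain \<alpha> \<beta> \<gamma> where H: "\<forall>s t. f (s *s u + t *s w) = (\<alpha> * s^2 + \<beta> * s * t + \<gamma> * t^2)^2"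
    using assms unfolding sq_on_def by blast
  define a' where "a' = \<alpha> * p^2 + \<beta> * p * q + \<gamma> * q^2"
  define b' where "b' = 2 * \<alpha> * p * r + \<beta> * (p * k + q * r) + 2 * \<gamma> * q * k"
  define c' where "c' = \<alpha> * r^2 + \<beta> * r * k + \<gamma> * k^2"
  have "f (s *s (p *s u + q *s w) + t *s (r *s u + k *s w)) = (a' * s^2 + b' * s * t + c' * t^2)^2" for s t
  proof -
    have v: "s *s (p *s u + q *s w) + t *s (r *s u + k *s w) = (s * p + t * r) *s u + (s * q + t * k) *s w"
      by (simp add: vec_eq_iff algebra_simps)
    have "\<alpha> * (s * p + t * r)^2 + \<beta> * (s * p + t * r) * (s * q + t * k) + \<gamma> * (s * q + t * k)^2
          = a' * s^2 + b' * s * t + c' * t^2"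
      unfolding a'_def b'_def c'_def by algebra
    then show ?thesis using H v by metis
  qed
  then show ?thesis unfolding sq_on_def by blast
qed

lemma sq_on_transfer:
  assumes f: "\<And>v. f' ((A::'K::field^3^3) *v v) = d * d * f v" and "sq_on f u w"
  shows "sq_on f' (A *v u) (A *v w)"
proof -
  obtain \<alpha> \<beta> \<gamma> where H: "\<forall>s t. f (s *s u + t *s w) = (\<alpha> * s^2 + \<beta> * s * t + \<gamma> * t^2)^2"
    using assms(2) unfolding sq_on_def by blast
  have "f' (s *s (A *v u) + t *s (A *v w)) = ((d*\<alpha>) * s^2 + (d*\<beta>) * s * t + (d*\<gamma>) * t^2)^2" for s t
  proof -
    have "f' (s *s (A *v u) + t *s (A *v w)) = d * d * f (s *s u + t *s w)"
      using f[of "s *s u + t *s w"] by (simp add: mv_lin2)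
    also have "\<dots> = d * d * (\<alpha> * s^2 + \<beta> * s * t + \<gamma> * t^2)^2" using H by simp
    also have "\<dots> = ((d*\<alpha>) * s^2 + (d*\<beta>) * s * t + (d*\<gamma>) * t^2)^2" by algebra
    finally show ?thesis .
  qed
  then show ?thesis unfolding sq_on_def by blast
qed

lemma sq_on_add_sq:
  fixes f h :: "'K::field^3 \<Rightarrow> 'K"
  assumes two: "(2::'K) = 0" and "sq_on f u w"
    and h: "\<And>s t. h (s *s u + t *s w) = (a * s^2 + b * s * t + c * t^2)^2"
  shows "sq_on (\<lambda>v. f v + h v) u w"
proof -
  obtain \<alpha> \<beta> \<gamma> where H: "\<forall>s t. f (s *s u + t *s w) = (\<alpha> * s^2 + \<beta> * s * t + \<gamma> * t^2)^2"
    using assms(2) unfolding sq_on_def by blast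
  have XY: "X^2 + Y^2 = (X+Y)^2" for X Y :: 'K
    by (simp only: power2_eq_square c2_sq_add[OF two])
  have "f (s *s u + t *s w) + h (s *s u + t *s w) = ((\<alpha>+a) * s^2 + (\<beta>+b) * s * t + (\<gamma>+c) * t^2)^2" for s t
  proof -
    have "(\<alpha> * s^2 + \<beta> * s * t + \<gamma> * t^2)^2 + (a * s^2 + b * s * t + c * t^2)^2
       = ((\<alpha> * s^2 + \<beta> * s * t + \<gamma> * t^2) + (a * s^2 + b * s * t + c * t^2))^2"
      by (rule XY)
    also have "\<dots> = ((\<alpha>+a) * s^2 + (\<beta>+b) * s * t + (\<gamma>+c) * t^2)^2" by algebra
    finally show ?thesis using H h by simp
  qed
  then show ?thesis unfolding sq_on_def by blast
qed

lemma qeval_line: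
  "qeval Q (s *s u + t *s w) = qeval Q u * s^2 + (qeval Q (u + w) - qeval Q u - qeval Q w) * s * t + qeval Q w * t^2"
  unfolding qeval_def by (simp add: algebra_simps power2_eq_square)
section \<open>Lines and the classification of lines on which xyz(x+y+z) is a square\<close>

definition F2ctx :: "'K::field itself \<Rightarrow> bool" where
  "F2ctx _ \<longleftrightarrow> (2::'K) = 0 \<and> (\<exists>w::'K. w * w + w + 1 = 0) \<and> (\<forall>a::'K. \<exists>b. b * b = a)"

lemma F2ctx_from: "is_F2bar TYPE('K::field) \<Longrightarrow> F2ctx TYPE('K)"
  unfolding F2ctx_def using F2bar_two F2bar_sqrt F2bar_omega by blast

lemma F2ctx_two: "F2ctx TYPE('K::field) \<Longrightarrow> (2::'K) = 0"
  unfolding F2ctx_def by blast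

lemma F2ctx_sqrt: "F2ctx TYPE('K::field) \<Longrightarrow> \<exists>b::'K. b * b = a"
  unfolding F2ctx_def by blast

definition gq :: "'K::field^3 \<Rightarrow> 'K" where
  "gq v = v$1 * v$2 * v$3 * (v$1 + v$2 + v$3)"

definition indep :: "'K::field^3 \<Rightarrow> 'K^3 \<Rightarrow> bool" where
  "indep u w \<longleftrightarrow> \<not> (\<exists>c. u = c *s w) \<and> w \<noteq> 0"

definition L7 :: "('K::field^3) set" where
  "L7 = {a. a \<noteq> 0 \<and> (\<forall>i. a$i = 0 \<or> a$i = 1)}"

lemma vec3_eq: "((u::'a^3) = v) \<longleftrightarrow> u$1 = v$1 \<and> u$2 = v$2 \<and> u$3 = v$3"
  by (simp add: vec_eq_iff forall_3)

lemma vec3_neq0: "((u::'a::zero^3) \<noteq> 0) \<longleftrightarrow> u$1 \<noteq> 0 \<or> u$2 \<noteq> 0 \<or> u$3 \<noteq> 0"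
  by (auto simp add: vec_eq_iff forall_3)

lemma ldot3: "ldot a v = a$1 * v$1 + a$2 * v$2 + a$3 * v$3"
  unfolding ldot_def by (simp add: sum_3)

lemma sq_on_quartic:
  fixes f :: "'K::field^3 \<Rightarrow> 'K"
  assumes ctx: "F2ctx TYPE('K)"
    and H: "\<And>s t. f (s *s u + t *s w) = h4 * s^4 + h3 * s^3 * t + h2 * s^2 * t^2 + h1 * s * t^3 + h0 * t^4"
  shows "sq_on f u w \<longleftrightarrow> h3 = 0 \<and> h1 = 0"
proof -
  have two: "(2::'K) = 0" and sqrt: "\<And>a::'K. \<exists>b. b * b = a" using ctx unfolding F2ctx_def by blast+
  obtain w where w: "w * w + w + 1 = (0::'K)" using ctx unfolding F2ctx_def by blast
  show ?thesis unfolding sq_on_def H using quartic_sq_iff[OF two w sqrt] by simp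
qed

lemma span12_scalar:
  fixes u1 u2 u3 w1 w2 w3 v1 v2 v3 b1 b2 b3 :: "'K::field"
  assumes d: "u1 * w2 - u2 * w1 \<noteq> 0"
    and bu: "b1 * u1 + b2 * u2 + b3 * u3 = 0"
    and bw: "b1 * w1 + b2 * w2 + b3 * w3 = 0"
    and bv: "b1 * v1 + b2 * v2 + b3 * v3 = 0"
    and b: "b1 \<noteq> 0 \<or> b2 \<noteq> 0 \<or> b3 \<noteq> 0"
  shows "\<exists>p q. v1 = p * u1 + q * w1 \<and> v2 = p * u2 + q * w2 \<and> v3 = p * u3 + q * w3"
proof -
  define \<delta> where "\<delta> = u1 * w2 - u2 * w1"
  define p where "p = (v1 * w2 - v2 * w1) / \<delta>"
  define q where "q = (u1 * v2 - u2 * v1) / \<delta>"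
  have d': "\<delta> \<noteq> 0" using d \<delta>_def by simp
  have pd: "p * \<delta> = v1 * w2 - v2 * w1" using d' by (simp add: p_def)
  have qd: "q * \<delta> = u1 * v2 - u2 * v1" using d' by (simp add: q_def)
  have "\<delta> * (p * u1 + q * w1) = (p * \<delta>) * u1 + (q * \<delta>) * w1" by algebra
  also have "\<dots> = (v1 * w2 - v2 * w1) * u1 + (u1 * v2 - u2 * v1) * w1" using pd qd by simp
  also have "\<dots> = \<delta> * v1" unfolding \<delta>_def by algebra
  finally have e1: "v1 = p * u1 + q * w1" using d' by simp
  have "\<delta> * (p * u2 + q * w2) = (p * \<delta>) * u2 + (q * \<delta>) * w2" by algebra
  also have "\<dots> = (v1 * w2 - v2 * w1) * u2 + (u1 * v2 - u2 * v1) * w2" using pd qd by simp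
  also have "\<dots> = \<delta> * v2" unfolding \<delta>_def by algebra
  finally have e2: "v2 = p * u2 + q * w2" using d' by simp
  have b3: "b3 \<noteq> 0"
  proof
    assume b30: "b3 = 0"
    have "b1 * \<delta> = (b1 * u1 + b2 * u2) * w2 - (b1 * w1 + b2 * w2) * u2" unfolding \<delta>_def by algebra
    then have "b1 * \<delta> = 0" using bu bw b30 by simp
    then have b10: "b1 = 0" using d' by simp
    have "b2 * \<delta> = (b1 * w1 + b2 * w2) * u1 - (b1 * u1 + b2 * u2) * w1" unfolding \<delta>_def by algebra
    then have "b2 * \<delta> = 0" using bu bw b30 by simp
    then have "b2 = 0" using d' by simp
    then show False using b b10 b30 by simp
  qed
  have "b3 * (v3 - (p * u3 + q * w3)) = (b1 * v1 + b2 * v2 + b3 * v3) - p * (b1 * u1 + b2 * u2 + b3 * u3) - q * (b1 * w1 + b2 * w2 + b3 * w3) - b1 * (v1 - (p * u1 + q * w1)) - b2 * (v2 - (p * u2 + q * w2))"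
    by algebra
  then have "b3 * (v3 - (p * u3 + q * w3)) = 0" using bu bw bv e1 e2 by simp
  then have "v3 = p * u3 + q * w3" using b3 by simp
  then show ?thesis using e1 e2 by blast
qed

lemma indep_minor:
  fixes u w :: "'K::field^3"
  assumes "indep u w"
  shows "u$1 * w$2 - u$2 * w$1 \<noteq> 0 \<or> u$1 * w$3 - u$3 * w$1 \<noteq> 0 \<or> u$2 * w$3 - u$3 * w$2 \<noteq> 0"
proof (rule ccontr)
  assume "\<not> ?thesis"
  then have m: "u$1 * w$2 = u$2 * w$1" "u$1 * w$3 = u$3 * w$1" "u$2 * w$3 = u$3 * w$2" by auto
  have w: "w \<noteq> 0" and nd: "\<not> (\<exists>c. u = c *s w)" using assms unfolding indep_def by auto
  have "\<exists>c. u = c *s w"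
  proof (cases "w$1 \<noteq> 0")
    case True
    show ?thesis
      by (rule exI[of _ "u$1 / w$1"]) (use True m in \<open>simp add: vec3_eq field_simps\<close>)
  next
    case False
    note F1 = this
    show ?thesis
    proof (cases "w$2 \<noteq> 0")
      case True
      show ?thesis
        by (rule exI[of _ "u$2 / w$2"]) (use True F1 m in \<open>simp add: vec3_eq field_simps\<close>)
    next
      case False
      then have "w$3 \<noteq> 0" using w F1 by (simp add: vec3_neq0)
      then show ?thesis
        by (intro exI[of _ "u$3 / w$3"]) (use False F1 m in \<open>simp add: vec3_eq field_simps\<close>)
    qed
  qed
  then show False using nd by blast
qed

lemma plane_span:
  fixes b u w v :: "'K::field^3"
  assumes b: "b \<noteq> 0" and bu: "ldot b u = 0" and bw: "ldot b w = 0" and bv: "ldot b v = 0"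
    and i: "indep u w"
  shows "\<exists>p q. v = p *s u + q *s w"
proof -
  have bb: "b$1 \<noteq> 0 \<or> b$2 \<noteq> 0 \<or> b$3 \<noteq> 0" using b by (simp add: vec3_neq0)
  note L = ldot3
  from indep_minor[OF i] consider
     (a) "u$1 * w$2 - u$2 * w$1 \<noteq> 0" | (b) "u$1 * w$3 - u$3 * w$1 \<noteq> 0" | (c) "u$2 * w$3 - u$3 * w$2 \<noteq> 0"
    by blast
  then show ?thesis
  proof cases
    case a
    from span12_scalar[OF a, of "b$1" "b$2" "b$3" "u$3" "w$3" "v$1" "v$2" "v$3"]
    obtain p q where "v$1 = p * u$1 + q * w$1 \<and> v$2 = p * u$2 + q * w$2 \<and> v$3 = p * u$3 + q * w$3"
      using bu bw bv bb by (auto simp: L)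
    then show ?thesis by (intro exI[of _ p] exI[of _ q]) (simp add: vec3_eq)
  next
    case b
    from span12_scalar[OF b, of "b$1" "b$3" "b$2" "u$2" "w$2" "v$1" "v$3" "v$2"]
    obtain p q where "v$1 = p * u$1 + q * w$1 \<and> v$3 = p * u$3 + q * w$3 \<and> v$2 = p * u$2 + q * w$2"
      using bu bw bv bb by (auto simp: L algebra_simps)
    then show ?thesis by (intro exI[of _ p] exI[of _ q]) (simp add: vec3_eq)
  next
    case c
    from span12_scalar[OF c, of "b$2" "b$3" "b$1" "u$1" "w$1" "v$2" "v$3" "v$1"]
    obtain p q where "v$2 = p * u$2 + q * w$2 \<and> v$3 = p * u$3 + q * w$3 \<and> v$1 = p * u$1 + q * w$1"
      using bu bw bv bb by (auto simp: L algebra_simps)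
    then show ?thesis by (intro exI[of _ p] exI[of _ q]) (simp add: vec3_eq)
  qed
qed

lemma sq_on_plane:
  fixes b u w u' w' :: "'K::field^3"
  assumes b: "b \<noteq> 0" and "ldot b u = 0" "ldot b w = 0" "ldot b u' = 0" "ldot b w' = 0"
    and "indep u w" and "sq_on f u w"
  shows "sq_on f u' w'"
proof -
  obtain p q where pq: "u' = p *s u + q *s w" using plane_span assms by metis
  obtain r k where rk: "w' = r *s u + k *s w" using plane_span assms by metis
  show ?thesis unfolding pq rk by (rule sq_on_span[OF assms(7)])
qed
lemma gq_case1:
  "gq (s *s vector [1, 0, x] + t *s vector [0, 1, y]) =
     0 * s^4 + (x*(1+x)) * s^3 * t + (x*(1+y)+y*(1+x)) * s^2 * t^2 + (y*(1+y)) * s * t^3 + 0 * t^4"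
  unfolding gq_def by (simp add: power2_eq_square power3_eq_cube power4_eq_xxxx) algebra

lemma gq_case2:
  "gq (s *s vector [1, x, 0] + t *s vector [0, 0, 1]) =
     0 * s^4 + (x*(1+x)) * s^3 * t + x * s^2 * t^2 + 0 * s * t^3 + 0 * t^4"
  unfolding gq_def by (simp add: power2_eq_square power3_eq_cube power4_eq_xxxx) algebra

lemma gq_case3:
  "gq (s *s vector [0, 1, 0] + t *s vector [0, 0, (1::'K::field)]) =
     0 * s^4 + 0 * s^3 * t + 0 * s^2 * t^2 + 0 * s * t^3 + 0 * t^4"
  unfolding gq_def by simp

lemma c2_01:
  assumes two: "(2::'K::field) = 0" shows "(x::'K) * (1 + x) = 0 \<longleftrightarrow> x = 0 \<or> x = 1"
proof
  assume "x * (1 + x) = 0"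
  then have "x = 0 \<or> 1 + x = 0" by simp
  then show "x = 0 \<or> x = 1" using c2_eq[OF two, of 1 x] by (auto simp: add.commute)
next
  assume "x = 0 \<or> x = 1"
  then show "x * (1 + x) = 0" using c2_add_self[OF two, of 1] by auto
qed

lemma c2_self: "(2::'K::field) = 0 \<Longrightarrow> (x::'K) + y * (x / y) = 0 \<or> y = 0"
  using c2_add_self by fastforce

lemma classify:
  fixes b :: "'K::field^3"
  assumes ctx: "F2ctx TYPE('K)" and b: "b \<noteq> 0"
  shows "(\<exists>u w. ldot b u = 0 \<and> ldot b w = 0 \<and> indep u w \<and> sq_on gq u w) \<longleftrightarrow> (\<exists>c a. a \<in> L7 \<and> b = c *s a)"
proof
  have two: "(2::'K) = 0" using ctx by (rule F2ctx_two)
  assume "\<exists>u w. ldot b u = 0 \<and> ldot b w = 0 \<and> indep u w \<and> sq_on gq u w"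
  then obtain u w where uw: "ldot b u = 0" "ldot b w = 0" "indep u w" "sq_on gq u w" by blast
  show "\<exists>c a. a \<in> L7 \<and> b = c *s a"
  proof (cases "b$3 \<noteq> 0")
    case True
    define x where "x = b$1 / b$3"
    define y where "y = b$2 / b$3"
    have l1: "ldot b (vector [1, 0, x]) = 0" unfolding ldot3 x_def using True c2_self[OF two, of "b$1" "b$3"] by simp
    have l2: "ldot b (vector [0, 1, y]) = 0" unfolding ldot3 y_def using True c2_self[OF two, of "b$2" "b$3"] by simp
    have "sq_on gq (vector [1, 0, x]) (vector [0, 1, y])"
      by (rule sq_on_plane[OF b uw(1,2) l1 l2 uw(3,4)])
    then have "x * (1 + x) = 0 \<and> y * (1 + y) = 0"
      using sq_on_quartic[OF ctx gq_case1] by blast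
    then have xy: "(x = 0 \<or> x = 1) \<and> (y = 0 \<or> y = 1)" using c2_01[OF two] by blast
    have "vector [x, y, 1] \<in> (L7 :: ('K^3) set)" unfolding L7_def using xy by (auto simp: vec3_neq0 forall_3)
    moreover have "b = b$3 *s vector [x, y, 1]" using True by (simp add: vec3_eq x_def y_def)
    ultimately show ?thesis by blast
  next
    case False
    note F3 = this
    show ?thesis
    proof (cases "b$2 \<noteq> 0")
      case True
      define x where "x = b$1 / b$2"
      have l1: "ldot b (vector [1, x, 0]) = 0" unfolding ldot3 x_def using True c2_self[OF two, of "b$1" "b$2"] by simp
      have l2: "ldot b (vector [0, 0, 1]) = 0" unfolding ldot3 using F3 by simp
      have "sq_on gq (vector [1, x, 0]) (vector [0, 0, 1])"
        by (rule sq_on_plane[OF b uw(1,2) l1 l2 uw(3,4)])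
      then have "x * (1 + x) = 0"
        using sq_on_quartic[OF ctx gq_case2] by blast
      then have xy: "x = 0 \<or> x = 1" using c2_01[OF two] by blast
      have "vector [x, 1, 0] \<in> (L7 :: ('K^3) set)" unfolding L7_def using xy by (auto simp: vec3_neq0 forall_3)
      moreover have "b = b$2 *s vector [x, 1, 0]" using True F3 by (simp add: vec3_eq x_def)
      ultimately show ?thesis by blast
    next
      case False
      have "vector [1, 0, 0] \<in> (L7 :: ('K^3) set)" unfolding L7_def by (auto simp: vec3_neq0 forall_3)
      moreover have "b = b$1 *s vector [1, 0, 0]" using False F3 by (simp add: vec3_eq)
      ultimately show ?thesis by blast
    qed
  qed
next
  have two: "(2::'K) = 0" using ctx by (rule F2ctx_two)
  assume "\<exists>c a. a \<in> L7 \<and> b = c *s a"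
  then obtain c a where a: "a \<in> L7" and bc: "b = c *s a" by blast
  have a01: "\<And>i. a$i = 0 \<or> a$i = 1" and a0: "a \<noteq> 0" using a unfolding L7_def by auto
  have q01: "a$i * (1 + a$i) = 0" for i using a01[of i] c2_01[OF two] by blast
  have self: "a$i + a$i = 0" for i using c2_add_self[OF two] by blast
  show "\<exists>u w. ldot b u = 0 \<and> ldot b w = 0 \<and> indep u w \<and> sq_on gq u w"
  proof (cases "a$3 = 1")
    case True
    have "ldot b (vector [1, 0, a$1]) = 0" "ldot b (vector [0, 1, a$2]) = 0"
      unfolding ldot3 bc using True self by (simp_all add: distrib_left[symmetric])
    moreover have "indep (vector [1, 0, a$1]) (vector [0::'K, 1, a$2])"
      unfolding indep_def by (auto simp: vec3_eq vec3_neq0)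
    moreover have "sq_on gq (vector [1, 0, a$1]) (vector [0, 1, a$2])"
      using sq_on_quartic[OF ctx gq_case1] q01 by blast
    ultimately show ?thesis by blast
  next
    case False
    then have A3: "a$3 = 0" using a01 by blast
    show ?thesis
    proof (cases "a$2 = 1")
      case True
      have "ldot b (vector [1, a$1, 0]) = 0" "ldot b (vector [0, 0, 1]) = 0"
        unfolding ldot3 bc using True A3 self by (simp_all add: distrib_left[symmetric])
      moreover have "indep (vector [1, a$1, 0]) (vector [0::'K, 0, 1])"
        unfolding indep_def by (auto simp: vec3_eq vec3_neq0)
      moreover have "sq_on gq (vector [1, a$1, 0]) (vector [0, 0, 1])"
        using sq_on_quartic[OF ctx gq_case2] q01 by blast
      ultimately show ?thesis by blast
    next
      case False
      then have A2: "a$2 = 0" using a01 by blast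
      have "ldot b (vector [0, 1, 0]) = 0" "ldot b (vector [0, 0, 1]) = 0"
        unfolding ldot3 bc using A2 A3 by simp_all
      moreover have "indep (vector [0, 1, 0]) (vector [0::'K, 0, 1])"
        unfolding indep_def by (auto simp: vec3_eq vec3_neq0)
      moreover have "sq_on gq (vector [0, 1, 0]) (vector [0::'K, 0, 1])"
        using sq_on_quartic[OF ctx gq_case3] by blast
      ultimately show ?thesis by blast
    qed
  qed
qed

lemma minv:
  fixes A :: "'K::field^'n^'n"
  assumes "invertible A"
  shows "A ** matrix_inv A = mat 1" "matrix_inv A ** A = mat 1"
proof -
  have "\<exists>A'. A ** A' = mat 1 \<and> A' ** A = mat 1" using assms unfolding invertible_def by blast
  then have "A ** matrix_inv A = mat 1 \<and> matrix_inv A ** A = mat 1"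
    unfolding matrix_inv_def by (rule someI_ex)
  then show "A ** matrix_inv A = mat 1" "matrix_inv A ** A = mat 1" by auto
qed

lemma minv_unique:
  fixes A B :: "'K::field^'n^'n"
  assumes "A ** B = mat 1"
  shows "matrix_inv A = B"
proof -
  have BA: "B ** A = mat 1" using assms matrix_left_right_inverse by blast
  then have inv: "invertible A" unfolding invertible_def using assms by blast
  have "matrix_inv A = matrix_inv A ** (A ** B)" using assms by simp
  also have "\<dots> = (matrix_inv A ** A) ** B" by (simp add: matrix_mul_assoc)
  also have "\<dots> = B" using minv(2)[OF inv] by simp
  finally show ?thesis .
qed

lemma minv_invertible:
  fixes A :: "'K::field^'n^'n"
  assumes "invertible A"
  shows "invertible (matrix_inv A)" "matrix_inv (matrix_inv A) = A"
proof -
  show "invertible (matrix_inv A)" unfolding invertible_def using minv[OF assms] by blast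
  show "matrix_inv (matrix_inv A) = A" by (rule minv_unique[OF minv(2)[OF assms]])
qed

lemma mv_minv:
  fixes A :: "'K::field^'n^'n"
  assumes "invertible A"
  shows "A *v (matrix_inv A *v x) = x" "matrix_inv A *v (A *v x) = x"
  using minv[OF assms] by (simp_all add: matrix_vector_mul_assoc)

lemma invertible_transpose:
  fixes A :: "'K::field^'n^'n"
  assumes "invertible A"
  shows "invertible (transpose A)" "matrix_inv (transpose A) = transpose (matrix_inv A)"
proof -
  have 1: "transpose A ** transpose (matrix_inv A) = mat 1"
    using minv(2)[OF assms] matrix_transpose_mul[of "matrix_inv A" A] by simp
  have 2: "transpose (matrix_inv A) ** transpose A = mat 1"
    using minv(1)[OF assms] matrix_transpose_mul[of A "matrix_inv A"] by simp
  show "invertible (transpose A)" unfolding invertible_def using 1 2 by blast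
  show "matrix_inv (transpose A) = transpose (matrix_inv A)" by (rule minv_unique[OF 1])
qed

lemma mv_inj:
  fixes A :: "'K::field^'n^'n"
  assumes "invertible A" "A *v x = A *v y"
  shows "x = y"
proof -
  have "matrix_inv A *v (A *v x) = matrix_inv A *v (A *v y)" using assms(2) by (rule arg_cong)
  then show ?thesis by (simp only: mv_minv(2)[OF assms(1)])
qed

lemma mv3: "((A::'K::field^3^3) *v v)$i = A$i$1 * v$1 + A$i$2 * v$2 + A$i$3 * v$3"
  by (simp add: matrix_vector_mult_def sum_3)

lemma mm3: "((A::'K::field^3^3) ** B)$i$j = A$i$1 * B$1$j + A$i$2 * B$2$j + A$i$3 * B$3$j"
  by (simp add: matrix_matrix_mult_def sum_3)

lemma ldot_mv: "ldot a ((M::'K::field^3^3) *v v) = ldot (transpose M *v a) v"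
  unfolding ldot3 mv3 by (simp add: transpose_def) algebra

definition line :: "'K::field^3 \<Rightarrow> ('K^3) set" where
  "line a = {v. ldot a v = 0}"

definition bt :: "('K::field^3 \<Rightarrow> 'K) \<Rightarrow> ('K^3) set set" where
  "bt f = {line a | a. a \<noteq> 0 \<and> (\<exists>u w. ldot a u = 0 \<and> ldot a w = 0 \<and> indep u w \<and> sq_on f u w)}"

definition lines7 :: "('K::field^3) set set" where
  "lines7 = {line a | a. a \<in> L7}"

lemma bitangents_bt: "bitangents F = bt (feval 4 F)"
  unfolding bitangents_def is_bitangent_def bt_def line_def indep_def sq_on_def
  by simp

lemma ldot_smult: "ldot (c *s a) v = c * ldot a v"
  unfolding ldot3 by (simp add: algebra_simps)

lemma ldot_smult2: "ldot a (c *s v) = c * ldot a v"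
  unfolding ldot3 by (simp add: algebra_simps)

lemma line_scale: "(c::'K::field) \<noteq> 0 \<Longrightarrow> line (c *s a) = line a"
  unfolding line_def by (simp add: ldot_smult)

lemma image_line:
  fixes A :: "'K::field^3^3"
  assumes "invertible A"
  shows "(\<lambda>v. A *v v) ` line a = line (transpose (matrix_inv A) *v a)"
proof (rule set_eqI)
  fix x
  have "x \<in> (\<lambda>v. A *v v) ` line a \<longleftrightarrow> matrix_inv A *v x \<in> line a"
  proof
    assume "x \<in> (\<lambda>v. A *v v) ` line a"
    then obtain v where "v \<in> line a" "x = A *v v" by blast
    then show "matrix_inv A *v x \<in> line a" using mv_minv(2)[OF assms] by simp
  next
    assume "matrix_inv A *v x \<in> line a"
    then show "x \<in> (\<lambda>v. A *v v) ` line a"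
      using mv_minv(1)[OF assms, of x] by (metis image_eqI)
  qed
  also have "\<dots> \<longleftrightarrow> x \<in> line (transpose (matrix_inv A) *v a)"
    unfolding line_def by (simp add: ldot_mv)
  finally show "x \<in> (\<lambda>v. A *v v) ` line a \<longleftrightarrow> x \<in> line (transpose (matrix_inv A) *v a)" .
qed

lemma image_lines_mult: "image_lines (A ** B) X = image_lines A (image_lines B X)"
  unfolding image_lines_def by (simp add: image_image matrix_vector_mul_assoc[symmetric])

lemma image_lines_id: "image_lines (mat 1) X = X"
  unfolding image_lines_def by simp

lemma image_lines_inv:
  fixes A :: "'K::field^3^3"
  assumes "invertible A"
  shows "image_lines (matrix_inv A) (image_lines A X) = X" "image_lines A (image_lines (matrix_inv A) X) = X"
  using minv[OF assms] by (simp_all add: image_lines_mult[symmetric] image_lines_id)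

lemma image_lines_eq_iff:
  fixes A :: "'K::field^3^3"
  assumes "invertible A"
  shows "image_lines A X = Y \<longleftrightarrow> X = image_lines (matrix_inv A) Y"
  using image_lines_inv[OF assms] by metis

lemma bt_transfer_sub:
  fixes A :: "'K::field^3^3" and f f' :: "'K^3 \<Rightarrow> 'K"
  assumes ctx: "F2ctx TYPE('K)" and A: "invertible A" and c: "c \<noteq> 0"
    and f: "\<And>v. f' (A *v v) = c * f v"
  shows "image_lines A (bt f) \<subseteq> bt f'"
proof
  fix L assume "L \<in> image_lines A (bt f)"
  then obtain a u w where L: "L = (\<lambda>v. A *v v) ` line a" and a: "a \<noteq> 0"
    and uw: "ldot a u = 0" "ldot a w = 0" "indep u w" "sq_on f u w"
    unfolding image_lines_def bt_def by blast
  define a' where "a' = transpose (matrix_inv A) *v a"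
  have ta: "transpose A *v a' = a"
    unfolding a'_def matrix_vector_mul_assoc
    using minv(2)[OF A] by (metis matrix_transpose_mul matrix_vector_mul_lid transpose_mat)
  have a': "a' \<noteq> 0" using ta a by auto
  have L': "L = line a'" unfolding L a'_def by (rule image_line[OF A])
  have u': "ldot a' (A *v u) = 0" unfolding ldot_mv ta by (rule uw(1))
  have w': "ldot a' (A *v w) = 0" unfolding ldot_mv ta by (rule uw(2))
  have i': "indep (A *v u) (A *v w)"
  proof -
    have "\<not> (\<exists>k. A *v u = k *s (A *v w))"
    proof
      assume "\<exists>k. A *v u = k *s (A *v w)"
      then obtain k where "A *v u = A *v (k *s w)" by (auto simp: mv_smult)
      then have "u = k *s w" by (rule mv_inj[OF A])
      then show False using uw(3) unfolding indep_def by blast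
    qed
    moreover have "A *v w \<noteq> 0"
    proof
      assume "A *v w = 0"
      then have "A *v w = A *v 0" by simp
      then have "w = 0" by (rule mv_inj[OF A])
      then show False using uw(3) unfolding indep_def by blast
    qed
    ultimately show ?thesis unfolding indep_def by blast
  qed
  obtain d where d: "d * d = c" using F2ctx_sqrt[OF ctx] by blast
  have "sq_on f' (A *v u) (A *v w)"
    by (rule sq_on_transfer[where d=d, OF _ uw(4)]) (simp add: f d)
  then show "L \<in> bt f'" unfolding bt_def L' using a' u' w' i' by blast
qed

lemma bt_transfer:
  fixes A :: "'K::field^3^3" and f f' :: "'K^3 \<Rightarrow> 'K"
  assumes ctx: "F2ctx TYPE('K)" and A: "invertible A" and c: "c \<noteq> 0"
    and f: "\<And>v. f' (A *v v) = c * f v"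
  shows "image_lines A (bt f) = bt f'"
proof
  show "image_lines A (bt f) \<subseteq> bt f'" by (rule bt_transfer_sub[OF ctx A c]) (rule f)
next
  have Ai: "invertible (matrix_inv A)" by (rule minv_invertible(1)[OF A])
  have f2: "f (matrix_inv A *v v) = inverse c * f' v" for v
    using f[of "matrix_inv A *v v"] c by (simp add: mv_minv(1)[OF A])
  have "image_lines (matrix_inv A) (bt f') \<subseteq> bt f"
    apply (rule bt_transfer_sub[OF ctx Ai, of "inverse c"])
    using c f2 by auto
  then have "image_lines A (image_lines (matrix_inv A) (bt f')) \<subseteq> image_lines A (bt f)"
    unfolding image_lines_def by blast
  then show "bt f' \<subseteq> image_lines A (bt f)" using image_lines_inv(2)[OF A] by simp
qed
section \<open>Bitangents of C_Q\<close>

lemma CQ_char2: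
  assumes two: "(2::'K::field) = 0"
  shows "CQ Q v = gq v + (qeval Q v)^2" "gq v = CQ Q v + (qeval (Q::'K qform) v)^2"
proof -
  show 1: "CQ Q v = gq v + (qeval Q v)^2"
    unfolding CQ_def gq_def c2_diff[OF two] by (simp add: add.commute)
  show "gq v = CQ Q v + (qeval (Q::'K qform) v)^2"
    unfolding 1 by (simp add: add.assoc c2_add_self[OF two])
qed

lemma sq_on_CQ:
  fixes Q :: "'K::field qform"
  assumes two: "(2::'K) = 0"
  shows "sq_on (CQ Q) u w \<longleftrightarrow> sq_on gq u w"
proof -
  have h: "(qeval Q (s *s u + t *s w))^2 = (qeval Q u * s^2 + (qeval Q (u + w) - qeval Q u - qeval Q w) * s * t + qeval Q w * t^2)^2" for s t
    by (simp only: qeval_line)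
  have e1: "CQ Q = (\<lambda>v. gq v + (qeval Q v)^2)" using CQ_char2(1)[OF two] by blast
  have e2: "gq = (\<lambda>v. CQ Q v + (qeval Q v)^2)" using CQ_char2(2)[OF two] by blast
  show ?thesis
  proof
    assume "sq_on (CQ Q) u w"
    then have "sq_on (\<lambda>v. CQ Q v + (qeval Q v)^2) u w" by (rule sq_on_add_sq[OF two _ h])
    then show "sq_on gq u w" using e2 by simp
  next
    assume "sq_on gq u w"
    then have "sq_on (\<lambda>v. gq v + (qeval Q v)^2) u w" by (rule sq_on_add_sq[OF two _ h])
    then show "sq_on (CQ Q) u w" using e1 by simp
  qed
qed

lemma bt_gq:
  assumes ctx: "F2ctx TYPE('K::field)"
  shows "bt (gq :: 'K^3 \<Rightarrow> 'K) = lines7"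
proof (rule set_eqI)
  fix L :: "('K^3) set"
  show "L \<in> bt gq \<longleftrightarrow> L \<in> lines7"
  proof
    assume "L \<in> bt gq"
    then obtain a where L: "L = line a" and a: "a \<noteq> 0"
      and ex: "\<exists>u w. ldot a u = 0 \<and> ldot a w = 0 \<and> indep u w \<and> sq_on gq u w"
      unfolding bt_def by blast
    obtain c a0 where a0: "a0 \<in> L7" and ac: "a = c *s a0" using classify[OF ctx a] ex by blast
    have "c \<noteq> 0" using a ac by auto
    then have "L = line a0" using L ac line_scale by simp
    then show "L \<in> lines7" unfolding lines7_def using a0 by blast
  next
    assume "L \<in> lines7"
    then obtain a where L: "L = line a" and a: "a \<in> L7" unfolding lines7_def by blast
    have a0: "a \<noteq> 0" using a unfolding L7_def by blast
    have "a = 1 *s a" by simp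
    then have "\<exists>u w. ldot a u = 0 \<and> ldot a w = 0 \<and> indep u w \<and> sq_on gq u w"
      using classify[OF ctx a0] a by blast
    then show "L \<in> bt gq" unfolding bt_def L using a0 by blast
  qed
qed

lemma bt_CQ:
  fixes Q :: "'K::field qform"
  assumes ctx: "F2ctx TYPE('K)"
  shows "bt (CQ Q) = lines7"
proof -
  have "bt (CQ Q) = bt gq"
    unfolding bt_def using sq_on_CQ[OF F2ctx_two[OF ctx], of Q] by simp
  then show ?thesis using bt_gq[OF ctx] by simp
qed

lemma bitangents_from_phi:
  fixes P :: "'K::field^3^3" and Q :: "'K qform"
  assumes ctx: "F2ctx TYPE('K)" and phi: "maps_curve P (feval 4 F) (CQ Q)"
  shows "bitangents F = image_lines (matrix_inv P) lines7"
proof -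
  obtain c where P: "invertible P" and c: "c \<noteq> 0" and h: "\<And>v. CQ Q (P *v v) = c * feval 4 F v"
    using phi unfolding maps_curve_def by blast
  have h2: "feval 4 F (matrix_inv P *v v) = inverse c * CQ Q v" for v
    using h[of "matrix_inv P *v v"] c by (simp add: mv_minv(1)[OF P])
  have "image_lines (matrix_inv P) (bt (CQ Q)) = bt (feval 4 F)"
    by (rule bt_transfer[OF ctx minv_invertible(1)[OF P], of "inverse c"]) (use c h2 in auto)
  then show ?thesis unfolding bitangents_bt bt_CQ[OF ctx] by simp
qed

lemma smat_mult_left: "smat c (A::'K::field^3^3) ** B = smat c (A ** B)"
  by (simp add: smat_def mm3 vec_eq_iff algebra_simps)

lemma smat_mult_right: "(A::'K::field^3^3) ** smat c B = smat c (A ** B)"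
  by (simp add: smat_def mm3 vec_eq_iff algebra_simps)

lemma smat_smat: "smat a (smat b (A::'K::field^3^3)) = smat (a * b) A"
  by (simp add: smat_def vec_eq_iff)

lemma smat_1: "smat 1 (A::'K::field^3^3) = A"
  by (simp add: smat_def vec_eq_iff)

lemma smat_mv: "smat c (A::'K::field^3^3) *v v = c *s (A *v v)"
  by (simp add: smat_def mv3 vec_eq_iff algebra_simps)

lemma smat_entry: "smat c A $ i $ j = c * A$i$j"
  by (simp add: smat_def)

lemma transpose_smat: "transpose (smat c (A::'K::field^3^3)) = smat c (transpose A)"
  by (simp add: smat_def transpose_def vec_eq_iff)

lemma invertible_smat:
  assumes "(c::'K::field) \<noteq> 0" "invertible (A::'K^3^3)"
  shows "invertible (smat c A)" "matrix_inv (smat c A) = smat (inverse c) (matrix_inv A)"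
proof -
  have 1: "smat c A ** smat (inverse c) (matrix_inv A) = mat 1"
    using assms by (simp add: smat_mult_left smat_mult_right smat_smat minv smat_1)
  have 2: "smat (inverse c) (matrix_inv A) ** smat c A = mat 1"
    using assms by (simp add: smat_mult_left smat_mult_right smat_smat minv smat_1)
  show "invertible (smat c A)" unfolding invertible_def using 1 2 by blast
  show "matrix_inv (smat c A) = smat (inverse c) (matrix_inv A)" by (rule minv_unique[OF 1])
qed

definition B01 :: "'K::field \<Rightarrow> bool" where "B01 x \<longleftrightarrow> x = 0 \<or> x = 1"

lemma B01_mult: "B01 x \<Longrightarrow> B01 y \<Longrightarrow> B01 (x * y)"
  unfolding B01_def by auto

lemma B01_add: "(2::'K::field) = 0 \<Longrightarrow> B01 (x::'K) \<Longrightarrow> B01 y \<Longrightarrow> B01 (x + y)"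
  unfolding B01_def using c2_add_self[of "1::'K"] by auto

lemma B01_diff: "(2::'K::field) = 0 \<Longrightarrow> B01 (x::'K) \<Longrightarrow> B01 y \<Longrightarrow> B01 (x - y)"
  using B01_add c2_diff by metis

lemma B01_01: "B01 (0::'K::field)" "B01 (1::'K::field)"
  unfolding B01_def by auto

definition mat01 :: "'K::field^3^3 \<Rightarrow> bool" where
  "mat01 A \<longleftrightarrow> (\<forall>i j. B01 (A$i$j))"

lemma Gamma_iff: "A \<in> Gamma \<longleftrightarrow> invertible A \<and> mat01 A"
  unfolding Gamma_def mat01_def B01_def by blast

lemma mat01_mult:
  assumes two: "(2::'K::field) = 0" and "mat01 (A::'K^3^3)" "mat01 B"
  shows "mat01 (A ** B)"
  using assms unfolding mat01_def mm3 by (intro allI B01_add[OF two] B01_mult) auto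

lemma mat01_mv:
  assumes two: "(2::'K::field) = 0" and "mat01 (A::'K^3^3)" "\<forall>i. B01 (v$i)"
  shows "B01 ((A *v v)$i)"
  using assms unfolding mat01_def mv3 by (intro B01_add[OF two] B01_mult) auto

lemma mat01_transpose: "mat01 A \<Longrightarrow> mat01 (transpose A)"
  unfolding mat01_def transpose_def by simp

definition adj3 :: "'K::field^3^3 \<Rightarrow> 'K^3^3" where
  "adj3 A = vector [
     vector [A$2$2 * A$3$3 - A$2$3 * A$3$2, A$1$3 * A$3$2 - A$1$2 * A$3$3, A$1$2 * A$2$3 - A$1$3 * A$2$2],
     vector [A$2$3 * A$3$1 - A$2$1 * A$3$3, A$1$1 * A$3$3 - A$1$3 * A$3$1, A$1$3 * A$2$1 - A$1$1 * A$2$3],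
     vector [A$2$1 * A$3$2 - A$2$2 * A$3$1, A$1$2 * A$3$1 - A$1$1 * A$3$2, A$1$1 * A$2$2 - A$1$2 * A$2$1]]"

lemma mat3_eq: "(A::'a^3^3) = B \<longleftrightarrow> (\<forall>i j. A$i$j = B$i$j)"
  by (simp add: vec_eq_iff)

lemma mat1_entries: "(mat 1 :: 'K::field^3^3)$1$1 = 1" "(mat 1 :: 'K::field^3^3)$2$2 = 1" "(mat 1 :: 'K::field^3^3)$3$3 = 1"
  "(mat 1 :: 'K::field^3^3)$1$2 = 0" "(mat 1 :: 'K::field^3^3)$1$3 = 0" "(mat 1 :: 'K::field^3^3)$2$1 = 0"
  "(mat 1 :: 'K::field^3^3)$2$3 = 0" "(mat 1 :: 'K::field^3^3)$3$1 = 0" "(mat 1 :: 'K::field^3^3)$3$2 = 0"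
  by (simp_all add: mat_def)

lemma adj3_mult:
  fixes A :: "'K::field^3^3"
  shows "A ** adj3 A = smat (det A) (mat 1)"
  unfolding mat3_eq forall_3 mm3 smat_entry det_3 mat1_entries adj3_def
  by (simp add: mat1_entries) algebra

lemma adj3_inv:
  fixes A :: "'K::field^3^3"
  assumes "det A \<noteq> 0"
  shows "matrix_inv A = smat (inverse (det A)) (adj3 A)"
proof (rule minv_unique)
  show "A ** smat (inverse (det A)) (adj3 A) = mat 1"
    using assms by (simp add: smat_mult_right adj3_mult smat_smat smat_1)
qed

lemma mat01_det:
  assumes two: "(2::'K::field) = 0" and "mat01 (A::'K^3^3)"
  shows "B01 (det A)"
  using assms unfolding mat01_def det_3
  by (intro B01_add[OF two] B01_diff[OF two] B01_mult) auto

lemma Gamma_det: "(2::'K::field) = 0 \<Longrightarrow> (A::'K^3^3) \<in> Gamma \<Longrightarrow> det A = 1"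
  using mat01_det invertible_det_nz unfolding Gamma_iff B01_def by blast

lemma Gamma_inv:
  assumes two: "(2::'K::field) = 0" and G: "(A::'K^3^3) \<in> Gamma"
  shows "matrix_inv A \<in> Gamma"
proof -
  have d: "det A = 1" by (rule Gamma_det[OF two G])
  have m: "mat01 A" and i: "invertible A" using G unfolding Gamma_iff by auto
  have "matrix_inv A = adj3 A" using adj3_inv[of A] d by (simp add: smat_1)
  moreover have "mat01 (adj3 A)"
    using m unfolding mat01_def adj3_def
    apply (intro allI)
    subgoal for i j
      using exhaust_3[of i] exhaust_3[of j]
      by (auto intro!: B01_diff[OF two] B01_mult)
    done
  ultimately show ?thesis using minv_invertible(1)[OF i] unfolding Gamma_iff by simp
qed

lemma Gamma_transpose:
  "(A::'K::field^3^3) \<in> Gamma \<Longrightarrow> transpose A \<in> Gamma"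
  unfolding Gamma_iff using invertible_transpose(1) mat01_transpose by blast

lemma Gamma_mult:
  "(2::'K::field) = 0 \<Longrightarrow> (A::'K^3^3) \<in> Gamma \<Longrightarrow> B \<in> Gamma \<Longrightarrow> A ** B \<in> Gamma"
  unfolding Gamma_iff using invertible_mult mat01_mult by blast
section \<open>Gamma and the seven lines\<close>

lemma L7_iff: "a \<in> L7 \<longleftrightarrow> a \<noteq> 0 \<and> (\<forall>i. B01 (a$i))"
  unfolding L7_def B01_def by blast

lemma Gamma_L7:
  assumes two: "(2::'K::field) = 0" and G: "(M::'K^3^3) \<in> Gamma" and a: "a \<in> L7"
  shows "M *v a \<in> L7"
proof -
  have m: "mat01 M" and i: "invertible M" using G unfolding Gamma_iff by auto
  have "M *v a \<noteq> 0"
  proof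
    assume "M *v a = 0"
    then have "M *v a = M *v 0" by simp
    then have "a = 0" by (rule mv_inj[OF i])
    then show False using a unfolding L7_iff by blast
  qed
  moreover have "\<forall>i. B01 ((M *v a)$i)" using mat01_mv[OF two m] a unfolding L7_iff by blast
  ultimately show ?thesis unfolding L7_iff by blast
qed

lemma Gamma_lines7_sub:
  assumes two: "(2::'K::field) = 0" and G: "(S::'K^3^3) \<in> Gamma"
  shows "image_lines S lines7 \<subseteq> lines7"
proof
  have i: "invertible S" using G unfolding Gamma_iff by auto
  have T: "transpose (matrix_inv S) \<in> Gamma" by (rule Gamma_transpose[OF Gamma_inv[OF two G]])
  fix L assume "L \<in> image_lines S lines7"
  then obtain a where L: "L = (\<lambda>v. S *v v) ` line a" and a: "a \<in> L7"
    unfolding image_lines_def lines7_def by blast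
  have "L = line (transpose (matrix_inv S) *v a)" unfolding L by (rule image_line[OF i])
  then show "L \<in> lines7" unfolding lines7_def using Gamma_L7[OF two T a] by blast
qed

lemma Gamma_lines7:
  assumes two: "(2::'K::field) = 0" and G: "(S::'K^3^3) \<in> Gamma"
  shows "image_lines S lines7 = lines7"
proof
  show "image_lines S lines7 \<subseteq> lines7" by (rule Gamma_lines7_sub[OF two G])
  have i: "invertible S" using G unfolding Gamma_iff by auto
  have "image_lines (matrix_inv S) lines7 \<subseteq> lines7" by (rule Gamma_lines7_sub[OF two Gamma_inv[OF two G]])
  then have "image_lines S (image_lines (matrix_inv S) lines7) \<subseteq> image_lines S lines7"
    unfolding image_lines_def by blast
  then show "lines7 \<subseteq> image_lines S lines7" using image_lines_inv(2)[OF i] by simp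
qed

lemma minors_zero:
  fixes u w :: "'K::field^3"
  assumes w: "w \<noteq> 0" and m: "u$1 * w$2 = u$2 * w$1" "u$1 * w$3 = u$3 * w$1" "u$2 * w$3 = u$3 * w$2"
  shows "\<exists>c. u = c *s w"
proof (cases "w$1 \<noteq> 0")
  case True
  show ?thesis
    by (rule exI[of _ "u$1 / w$1"]) (use True m in \<open>simp add: vec3_eq field_simps\<close>)
next
  case False
  note F1 = this
  show ?thesis
  proof (cases "w$2 \<noteq> 0")
    case True
    show ?thesis
      by (rule exI[of _ "u$2 / w$2"]) (use True F1 m in \<open>simp add: vec3_eq field_simps\<close>)
  next
    case False
    then have "w$3 \<noteq> 0" using w F1 by (simp add: vec3_neq0)
    then show ?thesis
      by (intro exI[of _ "u$3 / w$3"]) (use False F1 m in \<open>simp add: vec3_eq field_simps\<close>)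
  qed
qed

lemma line_eq:
  fixes a b :: "'K::field^3"
  assumes b: "b \<noteq> 0" and e: "line a = line b"
  shows "\<exists>k. a = k *s b"
proof -
  have I: "ldot b v = 0 \<Longrightarrow> ldot a v = 0" for v using e unfolding line_def by blast
  have 1: "a$1 * b$2 = a$2 * b$1"
    using I[of "vector [b$2, - b$1, 0]"] unfolding ldot3 by (simp add: algebra_simps)
  have 2: "a$1 * b$3 = a$3 * b$1"
    using I[of "vector [b$3, 0, - b$1]"] unfolding ldot3 by (simp add: algebra_simps)
  have 3: "a$2 * b$3 = a$3 * b$2"
    using I[of "vector [0, b$3, - b$2]"] unfolding ldot3 by (simp add: algebra_simps)
  show ?thesis by (rule minors_zero[OF b 1 2 3])
qed

lemma e_L7: "vector [1, 0, 0] \<in> (L7::('K::field^3) set)" "vector [0, 1, 0] \<in> (L7::('K::field^3) set)"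
   "vector [0, 0, 1] \<in> (L7::('K::field^3) set)" "vector [1, 1, 1] \<in> (L7::('K::field^3) set)"
  unfolding L7_iff B01_def by (auto simp: vec3_neq0 forall_3)

lemma lines7_image_L7:
  fixes S :: "'K::field^3^3"
  assumes i: "invertible S" and e: "image_lines S lines7 = lines7" and a: "a \<in> L7"
  shows "\<exists>k p. p \<in> L7 \<and> k \<noteq> 0 \<and> transpose (matrix_inv S) *v a = k *s p"
proof -
  have "(\<lambda>v. S *v v) ` line a \<in> lines7" using e a unfolding image_lines_def lines7_def by blast
  then obtain p where p: "p \<in> L7" and l: "line (transpose (matrix_inv S) *v a) = line p"
    unfolding image_line[OF i] lines7_def by blast
  have p0: "p \<noteq> 0" using p unfolding L7_iff by blast
  obtain k where k: "transpose (matrix_inv S) *v a = k *s p" using line_eq[OF p0 l] by blast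
  have Ti: "invertible (transpose (matrix_inv S))"
    by (rule invertible_transpose(1)[OF minv_invertible(1)[OF i]])
  have "k \<noteq> 0"
  proof
    assume "k = 0"
    then have "transpose (matrix_inv S) *v a = transpose (matrix_inv S) *v 0" using k by simp
    then have "a = 0" by (rule mv_inj[OF Ti])
    then show False using a unfolding L7_iff by blast
  qed
  then show ?thesis using p k by blast
qed
lemma lines7_stab:
  fixes S :: "'K::field^3^3"
  assumes two: "(2::'K) = 0" and i: "invertible S" and e: "image_lines S lines7 = lines7"
  shows "\<exists>S0 \<in> Gamma. pgl_eq S S0"
proof -
  define T where "T = transpose (matrix_inv S)"
  have Ti: "invertible T" unfolding T_def
    by (rule invertible_transpose(1)[OF minv_invertible(1)[OF i]])
  obtain k1 p1 where 1: "p1 \<in> L7" "k1 \<noteq> 0" "T *v vector [1, 0, 0] = k1 *s p1"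
    using lines7_image_L7[OF i e e_L7(1)] unfolding T_def by blast
  obtain k2 p2 where 2: "p2 \<in> L7" "k2 \<noteq> 0" "T *v vector [0, 1, 0] = k2 *s p2"
    using lines7_image_L7[OF i e e_L7(2)] unfolding T_def by blast
  obtain k3 p3 where 3: "p3 \<in> L7" "k3 \<noteq> 0" "T *v vector [0, 0, 1] = k3 *s p3"
    using lines7_image_L7[OF i e e_L7(3)] unfolding T_def by blast
  obtain \<mu> p4 where 4: "p4 \<in> L7" "\<mu> \<noteq> 0" "T *v vector [1, 1, 1] = \<mu> *s p4"
    using lines7_image_L7[OF i e e_L7(4)] unfolding T_def by blast
  define M where "M = transpose (vector [p1, p2, p3] :: 'K^3^3)"
  have Me: "M$i$1 = p1$i" "M$i$2 = p2$i" "M$i$3 = p3$i" for i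
    unfolding M_def transpose_def by simp_all
  have T1: "T$i$1 = k1 * p1$i" for i using 1(3) unfolding vec3_eq mv3 using exhaust_3[of i] by auto
  have T2: "T$i$2 = k2 * p2$i" for i using 2(3) unfolding vec3_eq mv3 using exhaust_3[of i] by auto
  have T3: "T$i$3 = k3 * p3$i" for i using 3(3) unfolding vec3_eq mv3 using exhaust_3[of i] by auto
  have T4: "T$i$1 + T$i$2 + T$i$3 = \<mu> * p4$i" for i using 4(3) unfolding vec3_eq mv3 using exhaust_3[of i] by auto
  have TM: "T$i$j = (vector [k1, k2, k3] :: 'K^3)$j * M$i$j" for i j
    using exhaust_3[of j] T1 T2 T3 Me by auto
  have "det T = k1 * k2 * k3 * det M"
    unfolding det_3 TM by simp algebra
  moreover have "det T \<noteq> 0" using Ti invertible_det_nz by blast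
  ultimately have "det M \<noteq> 0" by auto
  then have Mi: "invertible M" using invertible_det_nz by blast
  have "mat01 M" unfolding mat01_def
  proof (intro allI)
    fix i j :: 3
    show "B01 (M$i$j)" using exhaust_3[of j] 1(1) 2(1) 3(1) Me unfolding L7_iff by auto
  qed
  then have MG: "M \<in> Gamma" using Mi unfolding Gamma_iff by blast
  define N where "N = matrix_inv M"
  have NG: "N \<in> Gamma" unfolding N_def by (rule Gamma_inv[OF two MG])
  define lam where "lam = (vector [k1, k2, k3] :: 'K^3)"
  have "M *v lam = \<mu> *s p4"
    unfolding vec3_eq mv3 lam_def using T4 T1 T2 T3 Me by (simp add: mult.commute)
  then have "lam = \<mu> *s (N *v p4)"
    using mv_minv(2)[OF Mi, of lam] unfolding N_def by (simp add: mv_smult)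
  moreover have "B01 ((N *v p4)$j)" for j
    using mat01_mv[OF two _ ] NG 4(1) unfolding Gamma_iff L7_iff by blast
  moreover have "lam$j \<noteq> 0" for j unfolding lam_def using exhaust_3[of j] 1(2) 2(2) 3(2) by auto
  ultimately have kj: "lam$j = \<mu>" for j unfolding B01_def by (metis mult_zero_right mult_1_right vector_smult_component)
  have TS: "T = smat \<mu> M" unfolding mat3_eq smat_entry using TM kj unfolding lam_def by simp
  have "matrix_inv S = transpose T" unfolding T_def by simp
  also have "\<dots> = smat \<mu> (transpose M)" unfolding TS by (rule transpose_smat)
  finally have "S = matrix_inv (smat \<mu> (transpose M))"
    using minv_invertible(2)[OF i] by metis
  also have "\<dots> = smat (inverse \<mu>) (matrix_inv (transpose M))"
    by (rule invertible_smat(2)[OF 4(2) invertible_transpose(1)[OF Mi]])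
  finally have "S = smat (inverse \<mu>) (matrix_inv (transpose M))" .
  moreover have "matrix_inv (transpose M) \<in> Gamma" by (rule Gamma_inv[OF two Gamma_transpose[OF MG]])
  moreover have "inverse \<mu> \<noteq> 0" using 4(2) by simp
  ultimately show ?thesis unfolding pgl_eq_def by blast
qed
section \<open>Frobenius and rationality\<close>

lemma frob_mult:
  assumes two: "(2::'K::field) = 0"
  shows "frob_mat (2^m) ((A::'K^3^3) ** B) = frob_mat (2^m) A ** frob_mat (2^m) B"
  unfolding mat3_eq frob_mat_def mm3
  by (simp add: c2_pow2_add[OF two] power_mult_distrib)

lemma frob_mat1:
  assumes "q > 0"
  shows "frob_mat q (mat 1 :: 'K::field^3^3) = mat 1"
  unfolding mat3_eq frob_mat_def using assms by (simp add: mat_def)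

lemma frob_smat: "frob_mat q (smat c (A::'K::field^3^3)) = smat (c^q) (frob_mat q A)"
  unfolding mat3_eq frob_mat_def smat_entry by (simp add: power_mult_distrib)

lemma frob_mat01:
  assumes "q > 0" "mat01 (A::'K::field^3^3)"
  shows "frob_mat q A = A"
proof -
  have "A$i$j ^ q = A$i$j" for i j
  proof -
    have "A$i$j = 0 \<or> A$i$j = 1" using assms(2) unfolding mat01_def B01_def by blast
    then show ?thesis using assms(1) by (auto simp: power_0_left)
  qed
  then show ?thesis unfolding mat3_eq frob_mat_def by simp
qed

lemma frob_inv:
  assumes two: "(2::'K::field) = 0" and A: "invertible (A::'K^3^3)"
  shows "invertible (frob_mat (2^m) A)" "matrix_inv (frob_mat (2^m) A) = frob_mat (2^m) (matrix_inv A)"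
proof -
  have "frob_mat (2^m) A ** frob_mat (2^m) (matrix_inv A) = frob_mat (2^m) (A ** matrix_inv A)"
    by (rule frob_mult[OF two, symmetric])
  also have "\<dots> = mat 1" unfolding minv(1)[OF A] by (rule frob_mat1) simp
  finally have 1: "frob_mat (2^m) A ** frob_mat (2^m) (matrix_inv A) = mat 1" .
  have "frob_mat (2^m) (matrix_inv A) ** frob_mat (2^m) A = frob_mat (2^m) (matrix_inv A ** A)"
    by (rule frob_mult[OF two, symmetric])
  also have "\<dots> = mat 1" unfolding minv(2)[OF A] by (rule frob_mat1) simp
  finally have 2: "frob_mat (2^m) (matrix_inv A) ** frob_mat (2^m) A = mat 1" .
  show "invertible (frob_mat (2^m) A)" unfolding invertible_def using 1 2 by blast
  show "matrix_inv (frob_mat (2^m) A) = frob_mat (2^m) (matrix_inv A)" by (rule minv_unique[OF 1])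
qed

lemma minv_mult:
  fixes A B :: "'K::field^3^3"
  assumes "invertible A" "invertible B"
  shows "matrix_inv (A ** B) = matrix_inv B ** matrix_inv A"
proof (rule minv_unique)
  have "A ** B ** (matrix_inv B ** matrix_inv A) = A ** (B ** matrix_inv B) ** matrix_inv A"
    by (simp add: matrix_mul_assoc)
  then show "A ** B ** (matrix_inv B ** matrix_inv A) = mat 1" using minv[OF assms(1)] minv[OF assms(2)] by simp
qed

lemma mm_cancel:
  assumes "invertible (P::'K::field^3^3)"
  shows "X ** matrix_inv P ** P = X" "X ** P ** matrix_inv P = X"
    "P ** (matrix_inv P ** X) = X" "matrix_inv P ** (P ** X) = X"
  using minv[OF assms]
  by (simp_all only: matrix_mul_assoc[symmetric] matrix_mul_rid)
     (simp_all only: matrix_mul_assoc matrix_mul_lid)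

lemma det_nz_entry:
  assumes "invertible (R::'K::field^3^3)"
  shows "\<exists>i j. R$i$j \<noteq> 0"
proof (rule ccontr)
  assume "\<not> ?thesis"
  then have "det R = 0" unfolding det_3 by simp
  then show False using assms invertible_det_nz by blast
qed

lemma rational_of_frob:
  assumes q: "q > 0" and R: "invertible (R::'K::field^3^3)" and f: "frob_mat q R = smat lm R"
  shows "in_PGL3 (Fq q) R"
proof -
  obtain i j where r: "R$i$j \<noteq> 0" using det_nz_entry[OF R] by blast
  define e where "e = inverse (R$i$j)"
  have fe: "(R$a$b)^q = lm * R$a$b" for a b
    using f unfolding mat3_eq frob_mat_def smat_entry by simp
  have lam: "lm = (R$i$j)^q * e" using fe[of i j] r unfolding e_def by (simp add: field_simps)
  have "(e * R$a$b)^q = e * R$a$b" for a b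
  proof -
    have "(e * R$a$b)^q = e^q * lm * R$a$b" by (simp add: power_mult_distrib fe)
    also have "e^q * lm = (e * R$i$j)^q * e" unfolding lam by (simp add: power_mult_distrib)
    also have "e * R$i$j = 1" unfolding e_def using r by simp
    finally show ?thesis by simp
  qed
  moreover have "e \<noteq> 0" unfolding e_def using r by simp
  ultimately show ?thesis unfolding in_PGL3_def Fq_def using R by blast
qed

lemma frob_of_rational:
  assumes "in_PGL3 (Fq q) (R::'K::field^3^3)"
  shows "\<exists>\<nu>. \<nu> \<noteq> 0 \<and> frob_mat q R = smat \<nu> R"
proof -
  obtain c where c: "c \<noteq> 0" and h: "\<forall>i j. (c * R$i$j)^q = c * R$i$j"
    using assms unfolding in_PGL3_def Fq_def by blast
  have "(R$i$j)^q = (c / c^q) * R$i$j" for i j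
    using h[rule_format, of i j] c by (simp add: power_mult_distrib field_simps)
  then have "frob_mat q R = smat (c / c^q) R" unfolding mat3_eq frob_mat_def smat_entry by simp
  moreover have "c / c^q \<noteq> 0" using c by simp
  ultimately show ?thesis by blast
qed

lemma rational_iff:
  fixes P G S R :: "'K::field^3^3"
  assumes two: "(2::'K) = 0" and m: "m \<ge> 1"
    and P: "invertible P" and phiG: "pgl_eq (frob_mat (2^m) P ** matrix_inv P) G"
    and G: "G \<in> Gamma" and S: "S \<in> Gamma" and d: "d \<noteq> 0"
    and R: "R = smat d (matrix_inv P ** S ** P)"
  shows "in_PGL3 (Fq (2^m)) R \<longleftrightarrow> S ** G = G ** S"
proof -
  define q where "q = (2::nat)^m"
  have q0: "q > 0" unfolding q_def by simp
  obtain c where c: "c \<noteq> 0" and fc: "frob_mat q P ** matrix_inv P = smat c G"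
    using phiG unfolding pgl_eq_def q_def by blast
  have Gi: "invertible G" and Si: "invertible S" using G S unfolding Gamma_iff by auto
  have fP: "frob_mat q P = smat c (G ** P)"
  proof -
    have "frob_mat q P = frob_mat q P ** matrix_inv P ** P" by (simp add: mm_cancel[OF P])
    also have "\<dots> = smat c (G ** P)" unfolding fc by (simp add: smat_mult_left)
    finally show ?thesis .
  qed
  have fPi: "frob_mat q (matrix_inv P) = smat (inverse c) (matrix_inv P ** matrix_inv G)"
  proof -
    have "frob_mat q (matrix_inv P) = matrix_inv (frob_mat q P)"
      unfolding q_def by (rule frob_inv(2)[OF two P, symmetric])
    also have "\<dots> = smat (inverse c) (matrix_inv (G ** P))"
      unfolding fP by (rule invertible_smat(2)[OF c invertible_mult[OF Gi P]])
    also have "\<dots> = smat (inverse c) (matrix_inv P ** matrix_inv G)"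
      by (simp add: minv_mult[OF Gi P])
    finally show ?thesis .
  qed
  have fS: "frob_mat q S = S" using frob_mat01[OF q0] S unfolding Gamma_iff by blast
  define X where "X = matrix_inv P ** S ** P"
  define Y where "Y = matrix_inv P ** (matrix_inv G ** S ** G) ** P"
  have fR: "frob_mat q R = smat (d^q) Y"
  proof -
    have "frob_mat q R = smat (d^q) (frob_mat q (matrix_inv P) ** frob_mat q S ** frob_mat q P)"
      unfolding R frob_smat q_def by (simp add: frob_mult[OF two])
    also have "\<dots> = smat (d^q) (smat (inverse c) (matrix_inv P ** matrix_inv G) ** S ** smat c (G ** P))"
      unfolding fPi fS fP ..
    also have "\<dots> = smat (d^q) Y"
      unfolding Y_def using c by (simp add: smat_mult_left smat_mult_right smat_smat smat_1 matrix_mul_assoc)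
    finally show ?thesis .
  qed
  have Ri: "invertible R" unfolding R
    by (intro invertible_smat(1)[OF d] invertible_mult minv_invertible(1)[OF P] P Si)
  have RX: "R = smat d X" unfolding R X_def ..
  show ?thesis unfolding q_def[symmetric]
  proof
    assume "S ** G = G ** S"
    have "matrix_inv G ** S ** G = matrix_inv G ** (S ** G)" by (rule matrix_mul_assoc[symmetric])
    also have "\<dots> = matrix_inv G ** (G ** S)" using \<open>S ** G = G ** S\<close> by simp
    also have "\<dots> = S" by (rule mm_cancel(4)[OF Gi])
    finally have "matrix_inv G ** S ** G = S" .
    then have "Y = X" unfolding X_def Y_def by simp
    have "X = smat (inverse d) R" unfolding RX using d by (simp add: smat_smat smat_1)
    then have "frob_mat q R = smat (d^q) (smat (inverse d) R)" using fR \<open>Y = X\<close> by simp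
    then have "frob_mat q R = smat (d^q * inverse d) R" by (simp add: smat_smat)
    then show "in_PGL3 (Fq q) R" by (rule rational_of_frob[OF q0 Ri])
  next
    assume "in_PGL3 (Fq q) R"
    then obtain \<nu> where nu: "\<nu> \<noteq> 0" "frob_mat q R = smat \<nu> R" using frob_of_rational by blast
    define \<kappa> where "\<kappa> = inverse (d^q) * \<nu> * d"
    have k0: "\<kappa> \<noteq> 0" unfolding \<kappa>_def using nu d by simp
    have "smat (d^q) Y = smat \<nu> R" using nu(2) fR by simp
    also have "\<dots> = smat (\<nu> * d) X" unfolding RX by (simp add: smat_smat)
    finally have "smat (d^q) Y = smat (\<nu> * d) X" .
    then have "smat (inverse (d^q)) (smat (d^q) Y) = smat (inverse (d^q)) (smat (\<nu> * d) X)" by simp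
    then have YX: "Y = smat \<kappa> X" using d unfolding \<kappa>_def by (simp add: smat_smat smat_1 mult.assoc)
    have "matrix_inv G ** S ** G = P ** Y ** matrix_inv P"
      unfolding Y_def by (simp add: matrix_mul_assoc mm_cancel[OF P] minv[OF P])
    also have "\<dots> = smat \<kappa> S"
      unfolding YX X_def by (simp add: smat_mult_left smat_mult_right matrix_mul_assoc mm_cancel[OF P] minv[OF P])
    finally have "matrix_inv G ** S ** G = smat \<kappa> S" .
    then have "G ** (matrix_inv G ** S ** G) = G ** smat \<kappa> S" by simp
    moreover have "G ** (matrix_inv G ** S ** G) = S ** G"
      by (simp add: matrix_mul_assoc[symmetric] mm_cancel(3)[OF Gi])
    ultimately have SG: "S ** G = smat \<kappa> (G ** S)" by (simp add: smat_mult_right)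
    have GS: "G ** S \<in> Gamma" by (rule Gamma_mult[OF two G S])
    have SG': "S ** G \<in> Gamma" by (rule Gamma_mult[OF two S G])
    obtain i j where ij: "(G ** S)$i$j \<noteq> 0" using det_nz_entry GS unfolding Gamma_iff by blast
    have g1: "(G ** S)$i$j = 1" using ij GS unfolding Gamma_iff mat01_def B01_def by blast
    have "(S ** G)$i$j = \<kappa>" unfolding SG smat_entry g1 by simp
    moreover have "B01 ((S ** G)$i$j)" using SG' unfolding Gamma_iff mat01_def by blast
    ultimately have "\<kappa> = 1" using k0 unfolding B01_def by auto
    then show "S ** G = G ** S" using SG by (simp add: smat_1)
  qed
qed
definition Phi :: "'K::field \<Rightarrow> 'K \<Rightarrow> 'K \<Rightarrow> 'K" where "Phi x y z = x*y*z*(x+y+z)"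

definition Hf :: "'K::field \<Rightarrow> 'K \<Rightarrow> 'K \<Rightarrow> 'K \<Rightarrow> 'K \<Rightarrow> 'K \<Rightarrow> 'K \<Rightarrow> 'K \<Rightarrow> 'K \<Rightarrow> 'K \<Rightarrow> 'K \<Rightarrow> 'K \<Rightarrow> 'K" where
  "Hf a b c d e f g h i x y z =
     Phi a d g * x*x + Phi b e h * y*y + Phi c f i * z*z
   + (Phi (a+b) (d+e) (g+h) + Phi a d g + Phi b e h) * x * y
   + (Phi (b+c) (e+f) (h+i) + Phi b e h + Phi c f i) * y * z
   + (Phi (a+c) (d+f) (g+i) + Phi a d g + Phi c f i) * x * z"

lemma Hq_brute:
  fixes x y z :: "'K::field"
  assumes two: "(2::'K) = 0"
   and "a = 0 \<or> a = 1" "b = 0 \<or> b = 1" "c = 0 \<or> c = 1"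
   and "d = 0 \<or> d = 1" "e = 0 \<or> e = 1" "f = 0 \<or> f = 1"
   and "g = 0 \<or> g = 1" "h = 0 \<or> h = 1" "i = 0 \<or> i = 1"
   and det: "a*e*i + b*f*g + c*d*h - a*f*h - b*d*i - c*e*g \<noteq> 0"
  shows "Phi (a*x+b*y+c*z) (d*x+e*y+f*z) (g*x+h*y+i*z) = Phi x y z + (Hf a b c d e f g h i x y z)*(Hf a b c d e f g h i x y z)"
  using assms(2-)
  apply (subst c2_eq[OF two])
  apply (elim disjE; hypsubst)
  apply (simp_all only: Phi_def Hf_def mult_zero_left mult_zero_right mult_1_left mult_1_right add_0_left add_0_right diff_0 diff_0_right one_add_one two c2_add_self[OF two] c2_num1[OF two] c2_num0[OF two] c2_diff[OF two] c2_minus[OF two] not_True_eq_False not_False_eq_True simp_thms)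
  apply (simp_all only: distrib_left distrib_right)
  apply (simp_all only: add.assoc mult.assoc)
  apply (simp_all only: ac_simps)
  apply (simp_all add: c2_add_self[OF two] c2_add_self2[OF two])
  done
section \<open>The action of Gamma on quadratic forms\<close>

lemma qeval_pts:
  "qeval Q (vector [1, 0, 0]) = qa Q" "qeval Q (vector [0, 1, 0]) = qb Q" "qeval Q (vector [0, 0, 1]) = qc Q"
  "qeval Q (vector [1, 1, 0]) = qa Q + qb Q + qd Q" "qeval Q (vector [0, 1, 1]) = qb Q + qc Q + qe Q"
  "qeval Q (vector [1, 0, 1]) = qa Q + qc Q + qf Q"
  "qeval Q (vector [1, 1, 1]) = qa Q + qb Q + qc Q + qd Q + qe Q + qf Q"
  unfolding qeval_def by (simp_all add: algebra_simps)

lemma qform_eqI: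
  "qa Q1 = qa Q2 \<Longrightarrow> qb Q1 = qb Q2 \<Longrightarrow> qc Q1 = qc Q2 \<Longrightarrow> qd Q1 = qd Q2 \<Longrightarrow> qe Q1 = qe Q2 \<Longrightarrow> qf Q1 = qf Q2 \<Longrightarrow> Q1 = Q2"
  by (cases Q1; cases Q2) simp

lemma qeval_inj:
  fixes Q1 Q2 :: "'K::field qform"
  assumes "\<And>v. qeval Q1 v = qeval Q2 v"
  shows "Q1 = Q2"
proof -
  note p = assms[of "vector [1, 0, 0]"] assms[of "vector [0, 1, 0]"] assms[of "vector [0, 0, 1]"]
    assms[of "vector [1, 1, 0]"] assms[of "vector [0, 1, 1]"] assms[of "vector [1, 0, 1]"]
  show ?thesis using p unfolding qeval_pts by (intro qform_eqI) auto
qed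

definition qcomp :: "'K::field qform \<Rightarrow> 'K^3^3 \<Rightarrow> 'K qform" where
  "qcomp Q M = QF (qeval Q (M *v vector [1, 0, 0])) (qeval Q (M *v vector [0, 1, 0])) (qeval Q (M *v vector [0, 0, 1]))
     (qeval Q (M *v vector [1, 1, 0]) - qeval Q (M *v vector [1, 0, 0]) - qeval Q (M *v vector [0, 1, 0]))
     (qeval Q (M *v vector [0, 1, 1]) - qeval Q (M *v vector [0, 1, 0]) - qeval Q (M *v vector [0, 0, 1]))
     (qeval Q (M *v vector [1, 0, 1]) - qeval Q (M *v vector [0, 0, 1]) - qeval Q (M *v vector [1, 0, 0]))"

lemma qcomp_eval: "qeval (qcomp Q M) v = qeval Q (M *v v)"
  unfolding qcomp_def qeval_def mv3 by (simp add: power2_eq_square) algebra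

definition qadd :: "'K::field qform \<Rightarrow> 'K qform \<Rightarrow> 'K qform" where
  "qadd Q1 Q2 = QF (qa Q1 + qa Q2) (qb Q1 + qb Q2) (qc Q1 + qc Q2) (qd Q1 + qd Q2) (qe Q1 + qe Q2) (qf Q1 + qf Q2)"

lemma qadd_eval: "qeval (qadd Q1 Q2) v = qeval Q1 v + qeval Q2 v"
  unfolding qadd_def qeval_def by (simp add: algebra_simps)

lemma Hq_exists:
  fixes S :: "'K::field^3^3"
  assumes two: "(2::'K) = 0" and G: "S \<in> Gamma"
  shows "\<exists>H. \<forall>v. let w = S *v v in
              (w$1) * (w$2) * (w$3) * (w$1 + w$2 + w$3)
              = (v$1) * (v$2) * (v$3) * (v$1 + v$2 + v$3) + (qeval H v)^2"
proof -
  have m: "\<And>i j. S$i$j = 0 \<or> S$i$j = 1" using G unfolding Gamma_def by blast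
  have d: "det S \<noteq> 0" using G invertible_det_nz unfolding Gamma_def by blast
  define a where "a = S$1$1" define b where "b = S$1$2" define c where "c = S$1$3"
  define d' where "d' = S$2$1" define e where "e = S$2$2" define f where "f = S$2$3"
  define g where "g = S$3$1" define h where "h = S$3$2" define i where "i = S$3$3"
  define H where "H = QF (Phi a d' g) (Phi b e h) (Phi c f i)
     (Phi (a+b) (d'+e) (g+h) + Phi a d' g + Phi b e h)
     (Phi (b+c) (e+f) (h+i) + Phi b e h + Phi c f i)
     (Phi (a+c) (d'+f) (g+i) + Phi a d' g + Phi c f i)"
  have dd: "a*e*i + b*f*g + c*d'*h - a*f*h - b*d'*i - c*e*g \<noteq> 0"
    using d unfolding det_3 a_def b_def c_def d'_def e_def f_def g_def h_def i_def by simp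
  have "\<forall>v. let w = S *v v in
              (w$1) * (w$2) * (w$3) * (w$1 + w$2 + w$3)
              = (v$1) * (v$2) * (v$3) * (v$1 + v$2 + v$3) + (qeval H v)^2"
  proof
    fix v :: "'K^3"
    have "Phi (a* v$1+b* v$2+c* v$3) (d'* v$1+e* v$2+f* v$3) (g* v$1+h* v$2+i* v$3) = Phi (v$1) (v$2) (v$3)
       + (Hf a b c d' e f g h i (v$1) (v$2) (v$3))*(Hf a b c d' e f g h i (v$1) (v$2) (v$3))"
      by (rule Hq_brute[OF two]) (use m dd in \<open>simp_all add: a_def b_def c_def d'_def e_def f_def g_def h_def i_def\<close>)
    moreover have "Hf a b c d' e f g h i (v$1) (v$2) (v$3) = qeval H v"
      unfolding Hf_def H_def qeval_def by (simp add: power2_eq_square algebra_simps)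
    ultimately show "let w = S *v v in
              (w$1) * (w$2) * (w$3) * (w$1 + w$2 + w$3)
              = (v$1) * (v$2) * (v$3) * (v$1 + v$2 + v$3) + (qeval H v)^2"
      unfolding Let_def mv3 Phi_def a_def b_def c_def d'_def e_def f_def g_def h_def i_def
      by (simp add: power2_eq_square)
  qed
  then show ?thesis by blast
qed

lemma Hq_spec:
  fixes S :: "'K::field^3^3"
  assumes two: "(2::'K) = 0" and G: "S \<in> Gamma"
  shows "gq (S *v v) = gq v + (qeval (Hq S) v)^2"
proof -
  let ?P = "\<lambda>H. \<forall>v. let w = S *v v in
              (w$1) * (w$2) * (w$3) * (w$1 + w$2 + w$3)
              = (v$1) * (v$2) * (v$3) * (v$1 + v$2 + v$3) + (qeval H v)^2"
  obtain H0 where H0: "?P H0" using Hq_exists[OF two G] by blast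
  have uniq: "H = H0" if "?P H" for H
  proof (rule qeval_inj)
    fix v
    have "(qeval H v)^2 = (qeval H0 v)^2" using that[rule_format, of v] H0[rule_format, of v]
      unfolding Let_def by simp
    then show "qeval H v = qeval H0 v" using c2_sq_inj[OF two] unfolding power2_eq_square by blast
  qed
  have "?P (Hq S)" unfolding Hq_def by (rule theI[of ?P H0, OF H0 uniq])
  then show ?thesis unfolding gq_def Let_def by blast
qed

lemma gact_spec:
  fixes S :: "'K::field^3^3" and Q :: "'K qform"
  shows "qeval (gact S Q) v = qeval Q (matrix_inv S *v v) + qeval (Hq (matrix_inv S)) v"
proof -
  let ?P = "\<lambda>Q'. \<forall>v. qeval Q' v = qeval Q (matrix_inv S *v v) + qeval (Hq (matrix_inv S)) v"
  define Q0 where "Q0 = qadd (qcomp Q (matrix_inv S)) (Hq (matrix_inv S))"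
  have Q0: "?P Q0" unfolding Q0_def by (simp add: qadd_eval qcomp_eval)
  have uniq: "Q' = Q0" if "?P Q'" for Q'
    by (rule qeval_inj) (use that Q0 in simp)
  have "?P (gact S Q)" unfolding gact_def by (rule theI[of ?P Q0, OF Q0 uniq])
  then show ?thesis by blast
qed

lemma CQ_gact:
  fixes S :: "'K::field^3^3" and Q :: "'K qform"
  assumes two: "(2::'K) = 0" and G: "S \<in> Gamma"
  shows "CQ (gact S Q) (S *v w) = CQ Q w"
proof -
  have Si: "invertible S" using G unfolding Gamma_iff by blast
  define H where "H = Hq (matrix_inv S)"
  have hs: "gq w = gq (S *v w) + (qeval H (S *v w))^2"
    using Hq_spec[OF two Gamma_inv[OF two G], of "S *v w"] unfolding H_def mv_minv(2)[OF Si] .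
  have qs: "qeval (gact S Q) (S *v w) = qeval Q w + qeval H (S *v w)"
    unfolding gact_spec H_def mv_minv(2)[OF Si] ..
  have XY: "(X + Y)^2 = X^2 + Y^2" for X Y :: 'K
    by (simp only: power2_eq_square c2_sq_add[OF two])
  have "CQ (gact S Q) (S *v w) = gq (S *v w) + ((qeval Q w)^2 + (qeval H (S *v w))^2)"
    unfolding CQ_char2(1)[OF two] qs XY ..
  also have "\<dots> = (gq (S *v w) + (qeval H (S *v w))^2) + (qeval Q w)^2" by (simp add: algebra_simps)
  also have "\<dots> = CQ Q w" unfolding hs[symmetric] CQ_char2(1)[OF two] ..
  finally show ?thesis .
qed

section \<open>Uniqueness of Q from the curve C_Q\<close>

lemma CQ_unique:
  fixes Q1 Q2 :: "'K::field qform"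
  assumes ctx: "F2ctx TYPE('K)" and h: "\<And>y. CQ Q1 y = \<kappa> * CQ Q2 y"
  shows "Q1 = Q2"
proof -
  have two: "(2::'K) = 0" by (rule F2ctx_two[OF ctx])
  obtain k where k: "k * k = \<kappa>" using F2ctx_sqrt[OF ctx] by blast
  have pt: "qeval Q1 p = k * qeval Q2 p" if "gq p = 0" for p
  proof -
    have "(qeval Q1 p)^2 = \<kappa> * (qeval Q2 p)^2" using h[of p] that unfolding CQ_char2(1)[OF two] by simp
    then have "qeval Q1 p * qeval Q1 p = (k * qeval Q2 p) * (k * qeval Q2 p)"
      unfolding k[symmetric] power2_eq_square by (simp add: algebra_simps)
    then show ?thesis by (rule c2_sq_inj[OF two])
  qed
  have g0: "gq (vector [1, 0, 0] :: 'K^3) = 0" "gq (vector [0, 1, 0] :: 'K^3) = 0" "gq (vector [0, 0, 1] :: 'K^3) = 0"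
    "gq (vector [1, 1, 0] :: 'K^3) = 0" "gq (vector [0, 1, 1] :: 'K^3) = 0" "gq (vector [1, 0, 1] :: 'K^3) = 0"
    unfolding gq_def by simp_all
  have ca: "qa Q1 = k * qa Q2" using pt[OF g0(1)] unfolding qeval_pts .
  have cb: "qb Q1 = k * qb Q2" using pt[OF g0(2)] unfolding qeval_pts .
  have cc: "qc Q1 = k * qc Q2" using pt[OF g0(3)] unfolding qeval_pts .
  have cd: "qd Q1 = k * qd Q2" using pt[OF g0(4)] ca cb unfolding qeval_pts by (simp add: algebra_simps)
  have ce: "qe Q1 = k * qe Q2" using pt[OF g0(5)] cb cc unfolding qeval_pts by (simp add: algebra_simps)
  have cf: "qf Q1 = k * qf Q2" using pt[OF g0(6)] ca cc unfolding qeval_pts by (simp add: algebra_simps)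
  have g1: "gq (vector [1, 1, 1] :: 'K^3) = 1"
  proof -
    have "(1::'K) + 1 + 1 = 1" using c2_add_self[OF two, of 1] by simp
    then show ?thesis unfolding gq_def by simp
  qed
  define \<sigma>2 where "\<sigma>2 = qeval Q2 (vector [1, 1, 1])"
  have s1: "qeval Q1 (vector [1, 1, 1]) = k * \<sigma>2"
    unfolding \<sigma>2_def qeval_pts ca cb cc cd ce cf by (simp add: algebra_simps)
  have "1 + (k * \<sigma>2)^2 = \<kappa> * (1 + \<sigma>2^2)"
    using h[of "vector [1, 1, 1]"] unfolding CQ_char2(1)[OF two] g1 s1 \<sigma>2_def .
  then have "k * k = 1 * 1" unfolding k[symmetric] by (simp add: algebra_simps power2_eq_square)
  then have k1: "k = 1" by (rule c2_sq_inj[OF two])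
  show ?thesis using ca cb cc cd ce cf k1 by (intro qform_eqI) simp_all
qed

lemma image_line_smat:
  fixes S :: "'K::field^3^3"
  assumes d: "d \<noteq> 0"
  shows "(\<lambda>v. smat d S *v v) ` line a = (\<lambda>v. S *v v) ` line a"
proof
  show "(\<lambda>v. smat d S *v v) ` line a \<subseteq> (\<lambda>v. S *v v) ` line a"
  proof
    fix x assume "x \<in> (\<lambda>v. smat d S *v v) ` line a"
    then obtain v where v: "v \<in> line a" "x = smat d S *v v" by blast
    have "x = S *v (d *s v)" using v(2) by (simp add: smat_mv mv_smult)
    moreover have "d *s v \<in> line a" using v(1) unfolding line_def by (simp add: ldot_smult2)
    ultimately show "x \<in> (\<lambda>v. S *v v) ` line a" by blast
  qed
next
  show "(\<lambda>v. S *v v) ` line a \<subseteq> (\<lambda>v. smat d S *v v) ` line a"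
  proof
    fix x assume "x \<in> (\<lambda>v. S *v v) ` line a"
    then obtain v where v: "v \<in> line a" "x = S *v v" by blast
    have "x = smat d S *v (inverse d *s v)" using v(2) d by (simp add: smat_mv mv_smult)
    moreover have "inverse d *s v \<in> line a" using v(1) unfolding line_def by (simp add: ldot_smult2)
    ultimately show "x \<in> (\<lambda>v. smat d S *v v) ` line a" by blast
  qed
qed

lemma image_lines_smat:
  fixes S :: "'K::field^3^3"
  assumes d: "d \<noteq> 0"
  shows "image_lines (smat d S) lines7 = image_lines S lines7"
proof -
  have e: "image_lines A lines7 = {(\<lambda>v. A *v v) ` line a | a. a \<in> L7}" for A :: "'K^3^3"
    unfolding image_lines_def lines7_def by blast
  show ?thesis unfolding e image_line_smat[OF d] ..
qed

lemma conj_lines: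
  fixes P R :: "'K::field^3^3"
  assumes P: "invertible P"
  shows "image_lines R (image_lines (matrix_inv P) X) = image_lines (matrix_inv P) X
         \<longleftrightarrow> image_lines (P ** R ** matrix_inv P) X = X"
proof -
  have e: "image_lines (P ** R ** matrix_inv P) X = image_lines P (image_lines R (image_lines (matrix_inv P) X))"
    by (simp add: image_lines_mult)
  show ?thesis
  proof
    assume "image_lines R (image_lines (matrix_inv P) X) = image_lines (matrix_inv P) X"
    then show "image_lines (P ** R ** matrix_inv P) X = X" unfolding e using image_lines_inv(2)[OF P] by simp
  next
    assume "image_lines (P ** R ** matrix_inv P) X = X"
    then have "image_lines (matrix_inv P) (image_lines P (image_lines R (image_lines (matrix_inv P) X))) = image_lines (matrix_inv P) X"
      unfolding e by simp
    then show "image_lines R (image_lines (matrix_inv P) X) = image_lines (matrix_inv P) X"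
      using image_lines_inv(1)[OF P] by simp
  qed
qed

lemma part1:
  fixes P G R :: "'K::field^3^3" and F :: "'K tform"
  assumes two: "(2::'K) = 0" and m: "m \<ge> 1"
    and P: "invertible P" and phiG: "pgl_eq (frob_mat (2^m) P ** matrix_inv P) G"
    and G: "G \<in> Gamma" and BF: "bitangents F = image_lines (matrix_inv P) lines7"
    and R: "invertible R"
  shows "R \<in> Aut_lines (Fq (2^m)) (bitangents F) \<longleftrightarrow> (\<exists>S \<in> centralizer G. pgl_eq R (matrix_inv P ** S ** P))"
proof
  assume "R \<in> Aut_lines (Fq (2^m)) (bitangents F)"
  then have rat: "in_PGL3 (Fq (2^m)) R" and st: "image_lines R (bitangents F) = bitangents F"
    unfolding Aut_lines_def by auto
  have "image_lines (P ** R ** matrix_inv P) lines7 = lines7"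
    using st unfolding BF conj_lines[OF P] .
  moreover have "invertible (P ** R ** matrix_inv P)"
    by (intro invertible_mult P R minv_invertible(1)[OF P])
  ultimately obtain S0 where S0: "S0 \<in> Gamma" "pgl_eq (P ** R ** matrix_inv P) S0"
    using lines7_stab[OF two] by blast
  obtain d where d: "d \<noteq> 0" "P ** R ** matrix_inv P = smat d S0" using S0(2) unfolding pgl_eq_def by blast
  have "R = matrix_inv P ** (P ** R ** matrix_inv P) ** P"
    by (simp add: matrix_mul_assoc mm_cancel[OF P] minv[OF P])
  also have "\<dots> = smat d (matrix_inv P ** S0 ** P)"
    unfolding d(2) by (simp add: smat_mult_left smat_mult_right)
  finally have RS: "R = smat d (matrix_inv P ** S0 ** P)" .
  have "S0 ** G = G ** S0" using rational_iff[OF two m P phiG G S0(1) d(1) RS] rat by blast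
  then have "S0 \<in> centralizer G" unfolding centralizer_def using S0(1) by blast
  moreover have "pgl_eq R (matrix_inv P ** S0 ** P)" unfolding pgl_eq_def using RS d(1) by blast
  ultimately show "\<exists>S \<in> centralizer G. pgl_eq R (matrix_inv P ** S ** P)" by blast
next
  assume "\<exists>S \<in> centralizer G. pgl_eq R (matrix_inv P ** S ** P)"
  then obtain S d where S: "S \<in> Gamma" "S ** G = G ** S" and d: "d \<noteq> 0"
    and RS: "R = smat d (matrix_inv P ** S ** P)"
    unfolding centralizer_def pgl_eq_def by blast
  have rat: "in_PGL3 (Fq (2^m)) R" using rational_iff[OF two m P phiG G S(1) d RS] S(2) by blast
  have "P ** R ** matrix_inv P = smat d S"
    unfolding RS by (simp add: smat_mult_left smat_mult_right matrix_mul_assoc mm_cancel[OF P] minv[OF P])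
  then have "image_lines (P ** R ** matrix_inv P) lines7 = lines7"
    using image_lines_smat[OF d, of S] Gamma_lines7[OF two S(1)] by simp
  then have "image_lines R (bitangents F) = bitangents F" unfolding BF conj_lines[OF P] .
  then show "R \<in> Aut_lines (Fq (2^m)) (bitangents F)" unfolding Aut_lines_def using rat by blast
qed

lemma CQ_hom: "CQ Q (d *s x) = d^4 * CQ (Q::'K::field qform) x"
  unfolding CQ_def qeval_def by (simp add: power2_eq_square power4_eq_xxxx) algebra

lemma PRv:
  fixes P S :: "'K::field^3^3"
  assumes P: "invertible P"
  shows "P *v (smat d (matrix_inv P ** S ** P) *v v) = d *s (S *v (P *v v))"
proof -
  have "P *v (smat d (matrix_inv P ** S ** P) *v v) = d *s (P *v ((matrix_inv P ** S ** P) *v v))"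
    by (simp add: smat_mv mv_smult)
  also have "P *v ((matrix_inv P ** S ** P) *v v) = S *v (P *v v)"
    by (simp add: matrix_vector_mul_assoc matrix_mul_assoc minv[OF P])
  finally show ?thesis .
qed

lemma part2:
  fixes P G R :: "'K::field^3^3" and F F' :: "'K tform" and Q Q' :: "'K qform"
  assumes ctx: "F2ctx TYPE('K)" and m: "m \<ge> 1"
    and phi: "maps_curve P (feval 4 F) (CQ Q)"
    and phiG: "pgl_eq (frob_mat (2^m) P ** matrix_inv P) G"
    and G: "G \<in> Gamma"
    and phi': "maps_curve P (feval 4 F') (CQ Q')"
    and R: "invertible R"
  shows "(in_PGL3 (Fq (2^m)) R \<and> maps_curve R (feval 4 F) (feval 4 F'))
           \<longleftrightarrow> (\<exists>S \<in> centralizer G. gact S Q = Q' \<and> pgl_eq R (matrix_inv P ** S ** P))"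
proof -
  have two: "(2::'K) = 0" by (rule F2ctx_two[OF ctx])
  obtain c0 where P: "invertible P" and c0: "c0 \<noteq> 0" and h0: "\<And>v. CQ Q (P *v v) = c0 * feval 4 F v"
    using phi unfolding maps_curve_def by blast
  obtain c1 where c1: "c1 \<noteq> 0" and h1: "\<And>v. CQ Q' (P *v v) = c1 * feval 4 F' v"
    using phi' unfolding maps_curve_def by blast
  have BF: "bitangents F = image_lines (matrix_inv P) lines7" by (rule bitangents_from_phi[OF ctx phi])
  have BF': "bitangents F' = image_lines (matrix_inv P) lines7" by (rule bitangents_from_phi[OF ctx phi'])
  show ?thesis
  proof
    assume a: "in_PGL3 (Fq (2^m)) R \<and> maps_curve R (feval 4 F) (feval 4 F')"
    obtain cR where cR: "cR \<noteq> 0" and hR: "\<And>v. feval 4 F' (R *v v) = cR * feval 4 F v"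
      using a unfolding maps_curve_def by blast
    have "image_lines R (bt (feval 4 F)) = bt (feval 4 F')"
      by (rule bt_transfer[OF ctx R cR]) (rule hR)
    then have "image_lines R (bitangents F) = bitangents F" unfolding bitangents_bt[symmetric] BF' BF .
    then have "R \<in> Aut_lines (Fq (2^m)) (bitangents F)" unfolding Aut_lines_def using a by blast
    then obtain S where S: "S \<in> centralizer G" and pe: "pgl_eq R (matrix_inv P ** S ** P)"
      using part1[OF two m P phiG G BF R] by blast
    obtain d where d: "d \<noteq> 0" and RS: "R = smat d (matrix_inv P ** S ** P)" using pe unfolding pgl_eq_def by blast
    have SG: "S \<in> Gamma" using S unfolding centralizer_def by blast
    have Si: "invertible S" using SG unfolding Gamma_iff by blast
    define \<kappa> where "\<kappa> = c1 * cR / c0 / d^4"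
    have "CQ Q' y = \<kappa> * CQ (gact S Q) y" for y
    proof -
      define v where "v = matrix_inv P *v (matrix_inv S *v y)"
      have Pv: "P *v v = matrix_inv S *v y" unfolding v_def by (rule mv_minv(1)[OF P])
      have SPv: "S *v (P *v v) = y" unfolding Pv by (rule mv_minv(1)[OF Si])
      have "d^4 * CQ Q' y = CQ Q' (P *v (R *v v))"
        unfolding RS PRv[OF P] CQ_hom SPv ..
      also have "\<dots> = c1 * cR * feval 4 F v" by (simp add: h1 hR)
      also have "\<dots> = c1 * cR / c0 * CQ Q (P *v v)" using c0 by (simp add: h0)
      also have "CQ Q (P *v v) = CQ (gact S Q) y"
        using CQ_gact[OF two SG, of Q "P *v v"] unfolding SPv by simp
      finally have "d^4 * CQ Q' y = c1 * cR / c0 * CQ (gact S Q) y" .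
      then show ?thesis unfolding \<kappa>_def using d c0 by (simp add: field_simps)
    qed
    then have "Q' = gact S Q" by (rule CQ_unique[OF ctx])
    then show "\<exists>S \<in> centralizer G. gact S Q = Q' \<and> pgl_eq R (matrix_inv P ** S ** P)"
      using S pe by blast
  next
    assume "\<exists>S \<in> centralizer G. gact S Q = Q' \<and> pgl_eq R (matrix_inv P ** S ** P)"
    then obtain S where S: "S \<in> centralizer G" and gS: "gact S Q = Q'" and pe: "pgl_eq R (matrix_inv P ** S ** P)"
      by blast
    have rat: "in_PGL3 (Fq (2^m)) R" using part1[OF two m P phiG G BF R] S pe unfolding Aut_lines_def by blast
    obtain d where d: "d \<noteq> 0" and RS: "R = smat d (matrix_inv P ** S ** P)" using pe unfolding pgl_eq_def by blast
    have SG: "S \<in> Gamma" using S unfolding centralizer_def by blast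
    have "feval 4 F' (R *v v) = (d^4 * c0 / c1) * feval 4 F v" for v
    proof -
      have "c1 * feval 4 F' (R *v v) = CQ Q' (P *v (R *v v))" by (simp add: h1)
      also have "\<dots> = d^4 * CQ Q' (S *v (P *v v))" unfolding RS PRv[OF P] CQ_hom ..
      also have "CQ Q' (S *v (P *v v)) = CQ Q (P *v v)" unfolding gS[symmetric] by (rule CQ_gact[OF two SG])
      also have "\<dots> = c0 * feval 4 F v" by (rule h0)
      finally show ?thesis using c1 by (simp add: field_simps)
    qed
    moreover have "d^4 * c0 / c1 \<noteq> 0" using d c0 c1 by simp
    ultimately have "maps_curve R (feval 4 F) (feval 4 F')" unfolding maps_curve_def using R by blast
    then show "in_PGL3 (Fq (2^m)) R \<and> maps_curve R (feval 4 F) (feval 4 F')" using rat by blast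
  qed
qed
theorem lemma1p5:
  fixes q m :: nat and F :: "'K::field tform" and G P :: "'K^3^3" and Q :: "'K qform"
  assumes K: "is_F2bar TYPE('K)"
    and q: "q = 2 ^ m" "m \<ge> 1"
    and C: "nonsing_quartic F" "ordinary F" "defined_over (Fq q) F"
    and G: "G \<in> Gamma"
    and Q: "Q \<in> DD q G"
    and phi: "maps_curve P (feval 4 F) (CQ Q)"
    and phiG: "pgl_eq (frob_mat q P ** matrix_inv P) G"
  shows
    "(\<forall>R. invertible R \<longrightarrow>
        (R \<in> Aut_lines (Fq q) (bitangents F)
         \<longleftrightarrow> (\<exists>S \<in> centralizer G. pgl_eq R (matrix_inv P ** S ** P))))
     \<and> (\<forall>F' Q'. nonsing_quartic F' \<and> ordinary F' \<and> Q' \<in> QQ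
          \<and> maps_curve P (feval 4 F') (CQ Q') \<longrightarrow>
        (\<forall>R. invertible R \<longrightarrow>
          ((in_PGL3 (Fq q) R \<and> maps_curve R (feval 4 F) (feval 4 F'))
           \<longleftrightarrow> (\<exists>S \<in> centralizer G. gact S Q = Q' \<and> pgl_eq R (matrix_inv P ** S ** P)))))
     \<and> (\<forall>R. invertible R \<longrightarrow>
          ((in_PGL3 (Fq q) R \<and> maps_curve R (feval 4 F) (feval 4 F))
           \<longleftrightarrow> (\<exists>S \<in> centralizer G. gact S Q = Q \<and> pgl_eq R (matrix_inv P ** S ** P))))"
proof -
  have ctx: "F2ctx TYPE('K)" by (rule F2ctx_from[OF K])
  have two: "(2::'K) = 0" by (rule F2ctx_two[OF ctx])
  have P: "invertible P" using phi unfolding maps_curve_def by blast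
  have phiG': "pgl_eq (frob_mat (2^m) P ** matrix_inv P) G" using phiG unfolding q(1) .
  have BF: "bitangents F = image_lines (matrix_inv P) lines7" by (rule bitangents_from_phi[OF ctx phi])
  have p1: "\<forall>R. invertible R \<longrightarrow>
        (R \<in> Aut_lines (Fq (2^m)) (bitangents F)
         \<longleftrightarrow> (\<exists>S \<in> centralizer G. pgl_eq R (matrix_inv P ** S ** P)))"
    using part1[OF two q(2) P phiG' G BF] by blast
  have p2: "\<forall>F' Q'. nonsing_quartic F' \<and> ordinary F' \<and> Q' \<in> QQ
          \<and> maps_curve P (feval 4 F') (CQ Q') \<longrightarrow>
        (\<forall>R. invertible R \<longrightarrow>
          ((in_PGL3 (Fq (2^m)) R \<and> maps_curve R (feval 4 F) (feval 4 F'))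
           \<longleftrightarrow> (\<exists>S \<in> centralizer G. gact S Q = Q' \<and> pgl_eq R (matrix_inv P ** S ** P))))"
    using part2[OF ctx q(2) phi phiG' G] by blast
  have p3: "\<forall>R. invertible R \<longrightarrow>
          ((in_PGL3 (Fq (2^m)) R \<and> maps_curve R (feval 4 F) (feval 4 F))
           \<longleftrightarrow> (\<exists>S \<in> centralizer G. gact S Q = Q \<and> pgl_eq R (matrix_inv P ** S ** P)))"
    using part2[OF ctx q(2) phi phiG' G phi] by blast
  show ?thesis unfolding q(1) using p1 p2 p3 by blast
qed

end
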